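(* Let $F=(F,\xi):\mathcal A\to\mathcal B$ be a triangle functor between triangulated categories. The following are equivalent: (i) $F$ satisfies condition (WSM): for each morphism $u:X\to Y$ in $\mathcal A$ such that $F(u)$ is a splitting monomorphism in $\mathcal B$, there exists an object $X'$ and a morphism $u':Y\to X'$ in $\mathcal A$ such that $F(u'u)$ is an isomorphism in $\mathcal B$; (ii) $F$ is objective; (iii) the induced triangle functor $\widetilde F:\mathcal A/\operatorname{Ker}(F)\to\mathcal B$ is faithful.
   Context: All functors are covariant and additive. A triangle functor is a pair $(F,\xi)$ with $F$ additive and $\xi:F\circ[1]\to[1]\circ F$ a natural isomorphism such that $F$ sends each distinguished triangle $X\xrightarrow{u}Y\xrightarrow{v}Z\xrightarrow{w}X[1]$ to the distinguished triangle $F(X)\xrightarrow{F(u)}F(Y)\xrightarrow{F(v)}F(Z)\xrightarrow{\xi_XF(w)}F(X)[1]$. A functor $F$ between additive categories is objective if every morphism $f$ with $F(f)=0$ factors through an object $K$ with $F(K)=0$. $\operatorname{Ker}(F)$ denotes the full subcategory of $\mathcal A$ of objects $X$ with $F(X)=0$; it is a triangulated subcategory. For a triangulated subcategory $\mathcal K$ of $\mathcal A$, the Verdier quotient $V_{\mathcal K}:\mathcal A\to\mathcal A/\mathcal K$ is the dense triangle functor with $V_{\mathcal K}(\mathcal K)=0$ and the universal property that every triangle functor $G:\mathcal A\to\mathcal B$ with $G(\mathcal K)=0$ factors uniquely as $G=G'V_{\mathcal K}$ with $G'$ a triangle functor. Writing $V_F=V_{\operatorname{Ker}(F)}$, $\widetilde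 F$ is the unique triangle functor $\mathcal A/\operatorname{Ker}(F)\to\mathcal B$ with $F=\widetilde F V_F$. *)

theory Defs
  imports Main
begin

record ('o,'m) addcat =
  Ob  :: "'o set"
  Ar  :: "'m set"
  Dom :: "'m \<Rightarrow> 'o"
  Cod :: "'m \<Rightarrow> 'o"
  Cmp :: "'m \<Rightarrow> 'm \<Rightarrow> 'm"   (* Cmp C g f = g o f *)
  Idm :: "'o \<Rightarrow> 'm"
  Add :: "'m \<Rightarrow> 'm \<Rightarrow> 'm"
  Zer :: "'o \<Rightarrow> 'o \<Rightarrow> 'm"
  Neg :: "'m \<Rightarrow> 'm"

record ('o,'m) tricat = "('o,'m) addcat" +
  Sh   :: "'o \<Rightarrow> 'o"
  ShM  :: "'m \<Rightarrow> 'm"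
  Dist :: "('m \<times> 'm \<times> 'm) set"

definition hom :: "('o,'m,'x) addcat_scheme \<Rightarrow> 'o \<Rightarrow> 'o \<Rightarrow> 'm set" where
  "hom C X Y = {f \<in> Ar C. Dom C f = X \<and> Cod C f = Y}"

definition is_category :: "('o,'m,'x) addcat_scheme \<Rightarrow> bool" where
  "is_category C \<longleftrightarrow>
     (\<forall>f\<in>Ar C. Dom C f \<in> Ob C \<and> Cod C f \<in> Ob C) \<and>
     (\<forall>X\<in>Ob C. Idm C X \<in> hom C X X) \<and>
     (\<forall>X\<in>Ob C. \<forall>Y\<in>Ob C. \<forall>Z\<in>Ob C. \<forall>f\<in>hom C X Y. \<forall>g\<in>hom C Y Z. Cmp C g f \<in> hom C X Z) \<and>
     (\<forall>W\<in>Ob C. \<forall>X\<in>Ob C. \<forall>Y\<in>Ob C. \<forall>Z\<in>Ob C. \<forall>f\<in>hom C W X. \<forall>g\<in>hom C X Y. \<forall>h\<in>hom C Y Z.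
        Cmp C h (Cmp C g f) = Cmp C (Cmp C h g) f) \<and>
     (\<forall>f\<in>Ar C. Cmp C f (Idm C (Dom C f)) = f \<and> Cmp C (Idm C (Cod C f)) f = f)"

definition is_preadditive :: "('o,'m,'x) addcat_scheme \<Rightarrow> bool" where
  "is_preadditive C \<longleftrightarrow>
     (\<forall>X\<in>Ob C. \<forall>Y\<in>Ob C.
        Zer C X Y \<in> hom C X Y \<and>
        (\<forall>f\<in>hom C X Y. \<forall>g\<in>hom C X Y. Add C f g \<in> hom C X Y) \<and>
        (\<forall>f\<in>hom C X Y. Neg C f \<in> hom C X Y) \<and>
        (\<forall>f\<in>hom C X Y. \<forall>g\<in>hom C X Y. \<forall>h\<in>hom C X Y. Add C (Add C f g) h = Add C f (Add C g h)) \<and>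
        (\<forall>f\<in>hom C X Y. \<forall>g\<in>hom C X Y. Add C f g = Add C g f) \<and>
        (\<forall>f\<in>hom C X Y. Add C f (Zer C X Y) = f) \<and>
        (\<forall>f\<in>hom C X Y. Add C f (Neg C f) = Zer C X Y)) \<and>
     (\<forall>X\<in>Ob C. \<forall>Y\<in>Ob C. \<forall>Z\<in>Ob C.
        (\<forall>f\<in>hom C X Y. \<forall>g\<in>hom C Y Z. \<forall>g'\<in>hom C Y Z.
            Cmp C (Add C g g') f = Add C (Cmp C g f) (Cmp C g' f)) \<and>
        (\<forall>f\<in>hom C X Y. \<forall>f'\<in>hom C X Y. \<forall>g\<in>hom C Y Z.
            Cmp C g (Add C f f') = Add C (Cmp C g f) (Cmp C g f')))"

definition is_zero_obj :: "('o,'m,'x) addcat_scheme \<Rightarrow> 'o \<Rightarrow> bool" where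
  "is_zero_obj C Z \<longleftrightarrow> Z \<in> Ob C \<and>
     (\<forall>X\<in>Ob C. (\<exists>!f. f \<in> hom C Z X) \<and> (\<exists>!f. f \<in> hom C X Z))"

definition has_biproducts :: "('o,'m,'x) addcat_scheme \<Rightarrow> bool" where
  "has_biproducts C \<longleftrightarrow> (\<forall>X\<in>Ob C. \<forall>Y\<in>Ob C. \<exists>P\<in>Ob C.
     \<exists>p1\<in>hom C P X. \<exists>p2\<in>hom C P Y. \<exists>i1\<in>hom C X P. \<exists>i2\<in>hom C Y P.
       Cmp C p1 i1 = Idm C X \<and> Cmp C p2 i2 = Idm C Y \<and>
       Cmp C p1 i2 = Zer C Y X \<and> Cmp C p2 i1 = Zer C X Y \<and>
       Add C (Cmp C i1 p1) (Cmp C i2 p2) = Idm C P)"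

definition is_additive :: "('o,'m,'x) addcat_scheme \<Rightarrow> bool" where
  "is_additive C \<longleftrightarrow> is_category C \<and> is_preadditive C \<and>
     (\<exists>Z. is_zero_obj C Z) \<and> has_biproducts C"

definition is_iso :: "('o,'m,'x) addcat_scheme \<Rightarrow> 'm \<Rightarrow> bool" where
  "is_iso C f \<longleftrightarrow> f \<in> Ar C \<and> (\<exists>g\<in>hom C (Cod C f) (Dom C f).
      Cmp C g f = Idm C (Dom C f) \<and> Cmp C f g = Idm C (Cod C f))"

definition inv_arr :: "('o,'m,'x) addcat_scheme \<Rightarrow> 'm \<Rightarrow> 'm" where
  "inv_arr C f = (SOME g. g \<in> hom C (Cod C f) (Dom C f) \<and>
      Cmp C g f = Idm C (Dom C f) \<and> Cmp C f g = Idm C (Cod C f))"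

definition is_split_mono :: "('o,'m,'x) addcat_scheme \<Rightarrow> 'm \<Rightarrow> bool" where
  "is_split_mono C f \<longleftrightarrow> f \<in> Ar C \<and>
     (\<exists>r\<in>hom C (Cod C f) (Dom C f). Cmp C r f = Idm C (Dom C f))"

definition is_functor :: "('o,'m,'x) addcat_scheme \<Rightarrow> ('p,'n,'y) addcat_scheme
     \<Rightarrow> ('o \<Rightarrow> 'p) \<Rightarrow> ('m \<Rightarrow> 'n) \<Rightarrow> bool" where
  "is_functor C D Fo Fm \<longleftrightarrow>
     (\<forall>X\<in>Ob C. Fo X \<in> Ob D) \<and>
     (\<forall>X\<in>Ob C. \<forall>Y\<in>Ob C. \<forall>f\<in>hom C X Y. Fm f \<in> hom D (Fo X) (Fo Y)) \<and>
     (\<forall>X\<in>Ob C. Fm (Idm C X) = Idm D (Fo X)) \<and>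
     (\<forall>X\<in>Ob C. \<forall>Y\<in>Ob C. \<forall>Z\<in>Ob C. \<forall>f\<in>hom C X Y. \<forall>g\<in>hom C Y Z.
        Fm (Cmp C g f) = Cmp D (Fm g) (Fm f))"

definition is_additive_functor :: "('o,'m,'x) addcat_scheme \<Rightarrow> ('p,'n,'y) addcat_scheme
     \<Rightarrow> ('o \<Rightarrow> 'p) \<Rightarrow> ('m \<Rightarrow> 'n) \<Rightarrow> bool" where
  "is_additive_functor C D Fo Fm \<longleftrightarrow> is_functor C D Fo Fm \<and>
     (\<forall>X\<in>Ob C. \<forall>Y\<in>Ob C. \<forall>f\<in>hom C X Y. \<forall>g\<in>hom C X Y. Fm (Add C f g) = Add D (Fm f) (Fm g))"

definition is_triangle :: "('o,'m,'x) tricat_scheme \<Rightarrow> ('m \<times> 'm \<times> 'm) \<Rightarrow> bool" where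
  "is_triangle C t \<longleftrightarrow> (case t of (u, v, w) \<Rightarrow>
     u \<in> Ar C \<and> v \<in> hom C (Cod C u) (Cod C v) \<and> Dom C v = Cod C u \<and>
     w \<in> hom C (Cod C v) (Sh C (Dom C u)))"

definition is_tri_morph :: "('o,'m,'x) tricat_scheme \<Rightarrow> ('m \<times> 'm \<times> 'm) \<Rightarrow> ('m \<times> 'm \<times> 'm)
     \<Rightarrow> ('m \<times> 'm \<times> 'm) \<Rightarrow> bool" where
  "is_tri_morph C t t' m \<longleftrightarrow> (case t of (u, v, w) \<Rightarrow> case t' of (u', v', w') \<Rightarrow> case m of (a, b, c) \<Rightarrow>
     is_triangle C t \<and> is_triangle C t' \<and>
     a \<in> hom C (Dom C u) (Dom C u') \<and> b \<in> hom C (Cod C u) (Cod C u') \<and>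
     c \<in> hom C (Cod C v) (Cod C v') \<and>
     Cmp C b u = Cmp C u' a \<and> Cmp C c v = Cmp C v' b \<and>
     Cmp C (ShM C a) w = Cmp C w' c)"

definition is_triangulated :: "('o,'m,'x) tricat_scheme \<Rightarrow> bool" where
  "is_triangulated C \<longleftrightarrow>
     is_additive C \<and>
     \<comment> \<open>the shift is an additive auto-equivalence\<close>
     is_additive_functor C C (Sh C) (ShM C) \<and>
     (\<forall>X\<in>Ob C. \<forall>Y\<in>Ob C. bij_betw (ShM C) (hom C X Y) (hom C (Sh C X) (Sh C Y))) \<and>
     (\<forall>Y\<in>Ob C. \<exists>X\<in>Ob C. \<exists>f\<in>hom C (Sh C X) Y. is_iso C f) \<and>
     \<comment> \<open>TR1\<close>
     (\<forall>t\<in>Dist C. is_triangle C t) \<and>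
     (\<forall>t t' a b c. t \<in> Dist C \<and> is_tri_morph C t t' (a, b, c) \<and>
          is_iso C a \<and> is_iso C b \<and> is_iso C c \<longrightarrow> t' \<in> Dist C) \<and>
     (\<forall>X\<in>Ob C. \<forall>Z0. is_zero_obj C Z0 \<longrightarrow>
          (Idm C X, Zer C X Z0, Zer C Z0 (Sh C X)) \<in> Dist C) \<and>
     (\<forall>u\<in>Ar C. \<exists>v w. (u, v, w) \<in> Dist C) \<and>
     \<comment> \<open>TR2\<close>
     (\<forall>u v w. (u, v, w) \<in> Dist C \<longleftrightarrow>
          (is_triangle C (u, v, w) \<and> (v, w, Neg C (ShM C u)) \<in> Dist C)) \<and>
     \<comment> \<open>TR3\<close>
     (\<forall>u v w u' v' w' a b. (u, v, w) \<in> Dist C \<and> (u', v', w') \<in> Dist C \<and>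
          a \<in> hom C (Dom C u) (Dom C u') \<and> b \<in> hom C (Cod C u) (Cod C u') \<and>
          Cmp C b u = Cmp C u' a \<longrightarrow>
          (\<exists>c. is_tri_morph C (u, v, w) (u', v', w') (a, b, c))) \<and>
     \<comment> \<open>TR4 (octahedral axiom)\<close>
     (\<forall>u v j k l i m n. u \<in> Ar C \<and> v \<in> Ar C \<and> Dom C v = Cod C u \<and>
          (u, j, k) \<in> Dist C \<and> (v, l, i) \<in> Dist C \<and> (Cmp C v u, m, n) \<in> Dist C \<longrightarrow>
          (\<exists>f g. (f, g, Cmp C (ShM C j) i) \<in> Dist C \<and>
             Cmp C f j = Cmp C m v \<and> Cmp C n f = k \<and>
             Cmp C g m = l \<and> Cmp C i g = Cmp C (ShM C u) n))"

definition is_triangle_functor :: "('o,'m,'x) tricat_scheme \<Rightarrow> ('p,'n,'y) tricat_scheme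
     \<Rightarrow> ('o \<Rightarrow> 'p) \<Rightarrow> ('m \<Rightarrow> 'n) \<Rightarrow> ('o \<Rightarrow> 'n) \<Rightarrow> bool" where
  "is_triangle_functor A B Fo Fm \<xi> \<longleftrightarrow>
     is_additive_functor A B Fo Fm \<and>
     (\<forall>X\<in>Ob A. \<xi> X \<in> hom B (Fo (Sh A X)) (Sh B (Fo X)) \<and> is_iso B (\<xi> X)) \<and>
     (\<forall>X\<in>Ob A. \<forall>Y\<in>Ob A. \<forall>f\<in>hom A X Y.
        Cmp B (\<xi> Y) (Fm (ShM A f)) = Cmp B (ShM B (Fm f)) (\<xi> X)) \<and>
     (\<forall>u v w. (u, v, w) \<in> Dist A \<longrightarrow>
        (Fm u, Fm v, Cmp B (\<xi> (Dom A u)) (Fm w)) \<in> Dist B)"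

definition in_Ker :: "('p,'n,'y) addcat_scheme \<Rightarrow> ('o \<Rightarrow> 'p) \<Rightarrow> 'o \<Rightarrow> bool" where
  "in_Ker B Fo X \<longleftrightarrow> is_zero_obj B (Fo X)"

definition objective :: "('o,'m,'x) addcat_scheme \<Rightarrow> ('p,'n,'y) addcat_scheme
     \<Rightarrow> ('o \<Rightarrow> 'p) \<Rightarrow> ('m \<Rightarrow> 'n) \<Rightarrow> bool" where
  "objective A B Fo Fm \<longleftrightarrow>
     (\<forall>f\<in>Ar A. Fm f = Zer B (Fo (Dom A f)) (Fo (Cod A f)) \<longrightarrow>
        (\<exists>K\<in>Ob A. \<exists>g\<in>hom A (Dom A f) K. \<exists>h\<in>hom A K (Cod A f).
            f = Cmp A h g \<and> is_zero_obj B (Fo K)))"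

definition WSM :: "('o,'m,'x) addcat_scheme \<Rightarrow> ('p,'n,'y) addcat_scheme
     \<Rightarrow> ('o \<Rightarrow> 'p) \<Rightarrow> ('m \<Rightarrow> 'n) \<Rightarrow> bool" where
  "WSM A B Fo Fm \<longleftrightarrow>
     (\<forall>u\<in>Ar A. is_split_mono B (Fm u) \<longrightarrow>
        (\<exists>X'\<in>Ob A. \<exists>u'\<in>hom A (Cod A u) X'. is_iso B (Fm (Cmp A u' u))))"

section \<open>The Verdier quotient A/Ker(F) (calculus of fractions) and the induced functor\<close>

definition quasi_iso :: "('o,'m,'x) tricat_scheme \<Rightarrow> ('o \<Rightarrow> bool) \<Rightarrow> 'm \<Rightarrow> bool" where
  "quasi_iso A K s \<longleftrightarrow> s \<in> Ar A \<and> (\<exists>v w. (s, v, w) \<in> Dist A \<and> K (Cod A v))"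

text \<open>A roof X <-s- Z -f-> Y (representing f s^-1 in A/K).\<close>
definition is_roof :: "('o,'m,'x) tricat_scheme \<Rightarrow> ('o \<Rightarrow> bool) \<Rightarrow> 'o \<Rightarrow> 'o \<Rightarrow> 'm \<times> 'm \<Rightarrow> bool" where
  "is_roof A K X Y r \<longleftrightarrow> (case r of (s, f) \<Rightarrow>
     quasi_iso A K s \<and> Cod A s = X \<and> f \<in> hom A (Dom A s) Y)"

definition roof_equiv :: "('o,'m,'x) tricat_scheme \<Rightarrow> ('o \<Rightarrow> bool) \<Rightarrow> 'm \<times> 'm \<Rightarrow> 'm \<times> 'm \<Rightarrow> bool" where
  "roof_equiv A K r r' \<longleftrightarrow> (case r of (s, f) \<Rightarrow> case r' of (s', f') \<Rightarrow>
     (\<exists>W\<in>Ob A. \<exists>t\<in>hom A W (Dom A s). \<exists>t'\<in>hom A W (Dom A s').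
        Cmp A s t = Cmp A s' t' \<and> quasi_iso A K (Cmp A s t) \<and> Cmp A f t = Cmp A f' t'))"

definition induced_on_roof :: "('p,'n,'y) addcat_scheme \<Rightarrow> ('m \<Rightarrow> 'n) \<Rightarrow> 'm \<times> 'm \<Rightarrow> 'n" where
  "induced_on_roof B Fm r = (case r of (s, f) \<Rightarrow> Cmp B (Fm f) (inv_arr B (Fm s)))"

definition induced_faithful :: "('o,'m,'x) tricat_scheme \<Rightarrow> ('p,'n,'y) tricat_scheme
     \<Rightarrow> ('o \<Rightarrow> 'p) \<Rightarrow> ('m \<Rightarrow> 'n) \<Rightarrow> bool" where
  "induced_faithful A B Fo Fm \<longleftrightarrow>
     (\<forall>X\<in>Ob A. \<forall>Y\<in>Ob A. \<forall>r r'.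
        is_roof A (in_Ker B Fo) X Y r \<and> is_roof A (in_Ker B Fo) X Y r' \<and>
        induced_on_roof B Fm r = induced_on_roof B Fm r' \<longrightarrow>
        roof_equiv A (in_Ker B Fo) r r')"

end

theory Submission
  imports Defs
begin

locale addc =
  fixes C :: "('o,'m,'x) addcat_scheme"
  assumes additive: "is_additive C"
begin

lemma cat: "is_category C" and pre: "is_preadditive C"
  using additive unfolding is_additive_def by auto

lemma homD: "f \<in> hom C X Y \<Longrightarrow> f \<in> Ar C \<and> Dom C f = X \<and> Cod C f = Y"
  by (simp add: hom_def)

lemma homI: "f \<in> Ar C \<Longrightarrow> Dom C f = X \<Longrightarrow> Cod C f = Y \<Longrightarrow> f \<in> hom C X Y"
  by (simp add: hom_def)

lemma ar_hom: "f \<in> Ar C \<Longrightarrow> f \<in> hom C (Dom C f) (Cod C f)"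
  by (simp add: hom_def)

lemma hom_ob: "f \<in> hom C X Y \<Longrightarrow> X \<in> Ob C" "f \<in> hom C X Y \<Longrightarrow> Y \<in> Ob C"
  using cat unfolding is_category_def hom_def by auto

lemma id_hom: "X \<in> Ob C \<Longrightarrow> Idm C X \<in> hom C X X"
  using cat unfolding is_category_def by auto

lemma cmp_hom: "f \<in> hom C X Y \<Longrightarrow> g \<in> hom C Y Z \<Longrightarrow> Cmp C g f \<in> hom C X Z"
  using cat hom_ob unfolding is_category_def by blast

lemma assoc: "f \<in> hom C W X \<Longrightarrow> g \<in> hom C X Y \<Longrightarrow> h \<in> hom C Y Z \<Longrightarrow>
   Cmp C h (Cmp C g f) = Cmp C (Cmp C h g) f"
  using cat hom_ob unfolding is_category_def by blast

lemma id_r: "f \<in> hom C X Y \<Longrightarrow> Cmp C f (Idm C X) = f"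
  using cat unfolding is_category_def hom_def by auto

lemma id_l: "f \<in> hom C X Y \<Longrightarrow> Cmp C (Idm C Y) f = f"
  using cat unfolding is_category_def hom_def by auto

lemma zer_hom: "X \<in> Ob C \<Longrightarrow> Y \<in> Ob C \<Longrightarrow> Zer C X Y \<in> hom C X Y"
  using pre unfolding is_preadditive_def by auto

lemma add_hom: "f \<in> hom C X Y \<Longrightarrow> g \<in> hom C X Y \<Longrightarrow> Add C f g \<in> hom C X Y"
  using pre hom_ob unfolding is_preadditive_def by blast

lemma neg_hom: "f \<in> hom C X Y \<Longrightarrow> Neg C f \<in> hom C X Y"
  using pre hom_ob unfolding is_preadditive_def by blast

lemma add_assoc: "f \<in> hom C X Y \<Longrightarrow> g \<in> hom C X Y \<Longrightarrow> h \<in> hom C X Y \<Longrightarrow>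
   Add C (Add C f g) h = Add C f (Add C g h)"
  using pre hom_ob unfolding is_preadditive_def by blast

lemma add_comm: "f \<in> hom C X Y \<Longrightarrow> g \<in> hom C X Y \<Longrightarrow> Add C f g = Add C g f"
  using pre hom_ob unfolding is_preadditive_def by blast

lemma add_zer: "f \<in> hom C X Y \<Longrightarrow> Add C f (Zer C X Y) = f"
  using pre hom_ob unfolding is_preadditive_def by blast

lemma add_neg: "f \<in> hom C X Y \<Longrightarrow> Add C f (Neg C f) = Zer C X Y"
  using pre hom_ob unfolding is_preadditive_def by blast

lemma dist_l: assumes "f \<in> hom C X Y" "g \<in> hom C Y Z" "g' \<in> hom C Y Z" shows
   "Cmp C (Add C g g') f = Add C (Cmp C g f) (Cmp C g' f)"
proof -
  have o: "X \<in> Ob C" "Y \<in> Ob C" "Z \<in> Ob C" using assms hom_ob by blast+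
  have "\<forall>X\<in>Ob C. \<forall>Y\<in>Ob C. \<forall>Z\<in>Ob C. (\<forall>f\<in>hom C X Y. \<forall>g\<in>hom C Y Z. \<forall>g'\<in>hom C Y Z.
            Cmp C (Add C g g') f = Add C (Cmp C g f) (Cmp C g' f))"
    using pre unfolding is_preadditive_def by blast
  then show ?thesis using o assms by blast
qed

lemma dist_r: assumes "f \<in> hom C X Y" "f' \<in> hom C X Y" "g \<in> hom C Y Z" shows
   "Cmp C g (Add C f f') = Add C (Cmp C g f) (Cmp C g f')"
proof -
  have o: "X \<in> Ob C" "Y \<in> Ob C" "Z \<in> Ob C" using assms hom_ob by blast+
  have "\<forall>X\<in>Ob C. \<forall>Y\<in>Ob C. \<forall>Z\<in>Ob C. (\<forall>f\<in>hom C X Y. \<forall>f'\<in>hom C X Y. \<forall>g\<in>hom C Y Z.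
            Cmp C g (Add C f f') = Add C (Cmp C g f) (Cmp C g f'))"
    using pre unfolding is_preadditive_def by auto
  then show ?thesis using o assms by blast
qed

lemma zer_add: "f \<in> hom C X Y \<Longrightarrow> Add C (Zer C X Y) f = f"
  by (metis add_comm add_zer hom_ob zer_hom)

lemma neg_unique: assumes a: "a \<in> hom C X Y" and b: "b \<in> hom C X Y"
  and s: "Add C a b = Zer C X Y" shows "b = Neg C a"
proof -
  have "b = Add C b (Add C a (Neg C a))" using a b add_neg add_zer by metis
  also have "\<dots> = Add C (Add C a b) (Neg C a)"
    using a b neg_hom add_assoc add_comm by metis
  also have "\<dots> = Neg C a" using s a neg_hom zer_add by metis
  finally show ?thesis .
qed

lemma idem_zero: assumes a: "a \<in> hom C X Y" and s: "Add C a a = a" shows "a = Zer C X Y"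
proof -
  have "a = Add C a (Add C a (Neg C a))" using a add_neg add_zer by metis
  also have "\<dots> = Add C (Add C a a) (Neg C a)" using a neg_hom add_assoc by metis
  also have "\<dots> = Zer C X Y" using s a add_neg by metis
  finally show ?thesis .
qed

lemma neg_neg: "a \<in> hom C X Y \<Longrightarrow> Neg C (Neg C a) = a"
  by (metis add_comm add_neg neg_hom neg_unique)

lemma neg_zer: "X \<in> Ob C \<Longrightarrow> Y \<in> Ob C \<Longrightarrow> Neg C (Zer C X Y) = Zer C X Y"
  by (metis add_zer neg_unique zer_hom)

lemma neg_inj: "a \<in> hom C X Y \<Longrightarrow> b \<in> hom C X Y \<Longrightarrow> Neg C a = Neg C b \<Longrightarrow> a = b"
  by (metis neg_neg)

lemma neg_eq_zer: "a \<in> hom C X Y \<Longrightarrow> Neg C a = Zer C X Y \<Longrightarrow> a = Zer C X Y"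
  by (metis hom_ob neg_neg neg_zer)

lemma diff_zero: assumes "a \<in> hom C X Y" "b \<in> hom C X Y" "Add C a (Neg C b) = Zer C X Y"
  shows "a = b"
  by (metis assms neg_hom neg_neg neg_unique)

lemma cmp_zer_r: assumes g: "g \<in> hom C Y Z" and X: "X \<in> Ob C"
  shows "Cmp C g (Zer C X Y) = Zer C X Z"
proof -
  have z: "Zer C X Y \<in> hom C X Y" using X g hom_ob zer_hom by blast
  have "Add C (Cmp C g (Zer C X Y)) (Cmp C g (Zer C X Y)) = Cmp C g (Zer C X Y)"
    using dist_r[OF z z g] add_zer[OF z] by simp
  then show ?thesis using idem_zero cmp_hom[OF z g] by blast
qed

lemma cmp_zer_l: assumes g: "g \<in> hom C X Y" and Z: "Z \<in> Ob C"
  shows "Cmp C (Zer C Y Z) g = Zer C X Z"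
proof -
  have z: "Zer C Y Z \<in> hom C Y Z" using Z g hom_ob zer_hom by blast
  have "Add C (Cmp C (Zer C Y Z) g) (Cmp C (Zer C Y Z) g) = Cmp C (Zer C Y Z) g"
    using dist_l[OF g z z] add_zer[OF z] by simp
  then show ?thesis using idem_zero cmp_hom[OF g z] by blast
qed

lemma cmp_neg_r: assumes f: "f \<in> hom C X Y" and g: "g \<in> hom C Y Z"
  shows "Cmp C g (Neg C f) = Neg C (Cmp C g f)"
proof -
  have "Add C (Cmp C g f) (Cmp C g (Neg C f)) = Zer C X Z"
    using dist_r[OF f neg_hom[OF f] g] add_neg[OF f] cmp_zer_r[OF g] hom_ob[OF f] by simp
  then show ?thesis using neg_unique cmp_hom f g neg_hom by metis
qed

lemma cmp_neg_l: assumes f: "f \<in> hom C X Y" and g: "g \<in> hom C Y Z"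
  shows "Cmp C (Neg C g) f = Neg C (Cmp C g f)"
proof -
  have "Add C (Cmp C g f) (Cmp C (Neg C g) f) = Zer C X Z"
    using dist_l[OF f g neg_hom[OF g]] add_neg[OF g] cmp_zer_l[OF f] hom_ob[OF g] by simp
  then show ?thesis using neg_unique cmp_hom f g neg_hom by metis
qed

lemma zero_uniq_from: assumes "is_zero_obj C Z" "f \<in> hom C Z X" "g \<in> hom C Z X" shows "f = g"
proof -
  have "X \<in> Ob C" using assms(2) hom_ob by blast
  then have "\<exists>!f. f \<in> hom C Z X" using assms(1) unfolding is_zero_obj_def by blast
  then show ?thesis using assms by blast
qed

lemma zero_uniq_to: assumes "is_zero_obj C Z" "f \<in> hom C X Z" "g \<in> hom C X Z" shows "f = g"
proof -
  have "X \<in> Ob C" using assms(2) hom_ob by blast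
  then have "\<exists>!f. f \<in> hom C X Z" using assms(1) unfolding is_zero_obj_def by blast
  then show ?thesis using assms by blast
qed

lemma zero_ob: "is_zero_obj C Z \<Longrightarrow> Z \<in> Ob C"
  unfolding is_zero_obj_def by auto

lemma to_zero: "is_zero_obj C Z \<Longrightarrow> f \<in> hom C X Z \<Longrightarrow> f = Zer C X Z"
  by (meson hom_ob(1) zer_hom zero_ob zero_uniq_to)

lemma from_zero: "is_zero_obj C Z \<Longrightarrow> f \<in> hom C Z X \<Longrightarrow> f = Zer C Z X"
  by (meson hom_ob(2) zer_hom zero_ob zero_uniq_from)

lemma through_zero: "is_zero_obj C Z \<Longrightarrow> f \<in> hom C X Z \<Longrightarrow> g \<in> hom C Z Y \<Longrightarrow>
   Cmp C g f = Zer C X Y"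
  by (metis cmp_zer_r hom_ob(1) to_zero)

lemma ex_zero: "\<exists>Z. is_zero_obj C Z"
  using additive unfolding is_additive_def by auto

lemma id_zer_zero: assumes X: "X \<in> Ob C" and e: "Idm C X = Zer C X X"
  shows "is_zero_obj C X"
  unfolding is_zero_obj_def
proof (intro conjI ballI X)
  fix Y assume Y: "Y \<in> Ob C"
  show "\<exists>!f. f \<in> hom C X Y"
  proof (rule ex1I[of _ "Zer C X Y"])
    show "Zer C X Y \<in> hom C X Y" using X Y zer_hom by blast
    fix f assume f: "f \<in> hom C X Y"
    have "f = Cmp C f (Idm C X)" using id_r f by metis
    then show "f = Zer C X Y" using e cmp_zer_r f X by metis
  qed
  show "\<exists>!f. f \<in> hom C Y X"
  proof (rule ex1I[of _ "Zer C Y X"])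
    show "Zer C Y X \<in> hom C Y X" using X Y zer_hom by blast
    fix f assume f: "f \<in> hom C Y X"
    have "f = Cmp C (Idm C X) f" using id_l f by metis
    then show "f = Zer C Y X" using e cmp_zer_l f X by metis
  qed
qed

lemma zero_id_zer: "is_zero_obj C Z \<Longrightarrow> Idm C Z = Zer C Z Z"
  by (meson id_hom to_zero zero_ob)

lemma iso_inv: assumes "is_iso C f" "f \<in> hom C X Y"
  shows "inv_arr C f \<in> hom C Y X \<and> Cmp C (inv_arr C f) f = Idm C X \<and> Cmp C f (inv_arr C f) = Idm C Y"
proof -
  have "\<exists>g. g \<in> hom C (Cod C f) (Dom C f) \<and>
      Cmp C g f = Idm C (Dom C f) \<and> Cmp C f g = Idm C (Cod C f)"
    using assms(1) unfolding is_iso_def by blast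
  from someI_ex[OF this] show ?thesis using assms(2) unfolding inv_arr_def hom_def by auto
qed

lemma isoI: "f \<in> hom C X Y \<Longrightarrow> g \<in> hom C Y X \<Longrightarrow> Cmp C g f = Idm C X \<Longrightarrow> Cmp C f g = Idm C Y
   \<Longrightarrow> is_iso C f"
  unfolding is_iso_def hom_def by auto

lemma inv_iso: "is_iso C f \<Longrightarrow> f \<in> hom C X Y \<Longrightarrow> is_iso C (inv_arr C f)"
  by (meson iso_inv isoI)

lemma id_iso: "X \<in> Ob C \<Longrightarrow> is_iso C (Idm C X)"
  by (meson id_hom id_l isoI)

lemma iso_cmp: assumes f: "f \<in> hom C X Y" and g: "g \<in> hom C Y Z" and "is_iso C f" "is_iso C g"
  shows "is_iso C (Cmp C g f)"
proof -
  obtain f' where f': "f' \<in> hom C Y X" "Cmp C f' f = Idm C X" "Cmp C f f' = Idm C Y"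
    using iso_inv assms by blast
  obtain g' where g': "g' \<in> hom C Z Y" "Cmp C g' g = Idm C Y" "Cmp C g g' = Idm C Z"
    using iso_inv assms by blast
  have gf: "Cmp C g f \<in> hom C X Z" using cmp_hom f g by blast
  have "Cmp C (Cmp C f' g') (Cmp C g f) = Cmp C f' (Cmp C g' (Cmp C g f))"
    using assoc[OF gf g'(1) f'(1)] by simp
  also have "\<dots> = Cmp C f' (Cmp C (Cmp C g' g) f)" using assoc[OF f g g'(1)] by simp
  also have "\<dots> = Idm C X" using g'(2) id_l[OF f] f'(2) by simp
  finally have 1: "Cmp C (Cmp C f' g') (Cmp C g f) = Idm C X" .
  have fg: "Cmp C f' g' \<in> hom C Z X" using cmp_hom f'(1) g'(1) by blast
  have "Cmp C (Cmp C g f) (Cmp C f' g') = Cmp C g (Cmp C f (Cmp C f' g'))"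
    using assoc[OF fg f g] by simp
  also have "\<dots> = Cmp C g (Cmp C (Cmp C f f') g')" using assoc[OF g'(1) f'(1) f] by simp
  also have "\<dots> = Idm C Z" using f'(3) id_l[OF g'(1)] g'(3) by simp
  finally have 2: "Cmp C (Cmp C g f) (Cmp C f' g') = Idm C Z" .
  note 1 2
  then show ?thesis using isoI[OF gf fg] by blast
qed

lemma iso_cancel_zero: assumes f: "f \<in> hom C Y Z" and "is_iso C f" and g: "g \<in> hom C X Y"
  and e: "Cmp C f g = Zer C X Z" shows "g = Zer C X Y"
proof -
  obtain f' where f': "f' \<in> hom C Z Y" "Cmp C f' f = Idm C Y"
    using iso_inv assms by blast
  have "g = Cmp C (Cmp C f' f) g" using f' id_l g by metis
  also have "\<dots> = Cmp C f' (Zer C X Z)" using assoc[OF g f f'(1)] e by simp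
  finally show ?thesis using cmp_zer_r[OF f'(1)] hom_ob[OF g] by simp
qed

end



locale addfun = S: addc C + T: addc D
  for C :: "('o,'m,'x) addcat_scheme" and D :: "('p,'n,'y) addcat_scheme" +
  fixes Fo :: "'o \<Rightarrow> 'p" and Fm :: "'m \<Rightarrow> 'n"
  assumes af: "is_additive_functor C D Fo Fm"
begin

lemma F_ob: "X \<in> Ob C \<Longrightarrow> Fo X \<in> Ob D"
  using af unfolding is_additive_functor_def is_functor_def by blast

lemma F_hom: assumes "f \<in> hom C X Y" shows "Fm f \<in> hom D (Fo X) (Fo Y)"
proof -
  have "X \<in> Ob C" "Y \<in> Ob C" using assms S.hom_ob by blast+
  then show ?thesis using af assms unfolding is_additive_functor_def is_functor_def by blast
qed

lemma F_id: "X \<in> Ob C \<Longrightarrow> Fm (Idm C X) = Idm D (Fo X)"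
  using af unfolding is_additive_functor_def is_functor_def by blast

lemma F_cmp: assumes "f \<in> hom C X Y" "g \<in> hom C Y Z" shows "Fm (Cmp C g f) = Cmp D (Fm g) (Fm f)"
proof -
  have "X \<in> Ob C" "Y \<in> Ob C" "Z \<in> Ob C" using assms S.hom_ob by blast+
  then show ?thesis using af assms unfolding is_additive_functor_def is_functor_def by blast
qed

lemma F_add: assumes "f \<in> hom C X Y" "g \<in> hom C X Y" shows "Fm (Add C f g) = Add D (Fm f) (Fm g)"
proof -
  have "X \<in> Ob C" "Y \<in> Ob C" using assms S.hom_ob by blast+
  then show ?thesis using af assms unfolding is_additive_functor_def by blast
qed

lemma F_zer: assumes "X \<in> Ob C" "Y \<in> Ob C" shows "Fm (Zer C X Y) = Zer D (Fo X) (Fo Y)"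
proof -
  have z: "Zer C X Y \<in> hom C X Y" using assms S.zer_hom by blast
  have "Add D (Fm (Zer C X Y)) (Fm (Zer C X Y)) = Fm (Zer C X Y)"
    using F_add[OF z z] S.add_zer[OF z] by simp
  then show ?thesis using T.idem_zero F_hom[OF z] by blast
qed

lemma F_neg: assumes f: "f \<in> hom C X Y" shows "Fm (Neg C f) = Neg D (Fm f)"
proof -
  have "Add D (Fm f) (Fm (Neg C f)) = Zer D (Fo X) (Fo Y)"
    using F_add[OF f S.neg_hom[OF f]] S.add_neg[OF f] F_zer S.hom_ob[OF f] by simp
  then show ?thesis using T.neg_unique F_hom f S.neg_hom by metis
qed

lemma F_iso: assumes f: "f \<in> hom C X Y" and i: "is_iso C f" shows "is_iso D (Fm f)"
proof -
  obtain g where g: "g \<in> hom C Y X" "Cmp C g f = Idm C X" "Cmp C f g = Idm C Y"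
    using S.iso_inv[OF i f] by blast
  have "Cmp D (Fm g) (Fm f) = Idm D (Fo X)" using F_cmp[OF f g(1)] g(2) F_id S.hom_ob[OF f] by simp
  moreover have "Cmp D (Fm f) (Fm g) = Idm D (Fo Y)" using F_cmp[OF g(1) f] g(3) F_id S.hom_ob[OF f] by simp
  ultimately show ?thesis using T.isoI F_hom f g(1) by blast
qed

end

locale tri = addc C for C :: "('o,'m,'x) tricat_scheme" +
  assumes tri: "is_triangulated C"
begin

lemmas T = tri[unfolded is_triangulated_def]
lemmas T2 = T[THEN conjunct2, THEN conjunct1]
lemmas T3 = T[THEN conjunct2, THEN conjunct2, THEN conjunct1]
lemmas T4 = T[THEN conjunct2, THEN conjunct2, THEN conjunct2, THEN conjunct1]
lemmas T5 = T[THEN conjunct2, THEN conjunct2, THEN conjunct2, THEN conjunct2, THEN conjunct1]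
lemmas T6 = T[THEN conjunct2, THEN conjunct2, THEN conjunct2, THEN conjunct2, THEN conjunct2, THEN conjunct1]
lemmas T7 = T[THEN conjunct2, THEN conjunct2, THEN conjunct2, THEN conjunct2, THEN conjunct2, THEN conjunct2, THEN conjunct1]
lemmas T8 = T[THEN conjunct2, THEN conjunct2, THEN conjunct2, THEN conjunct2, THEN conjunct2, THEN conjunct2, THEN conjunct2, THEN conjunct1]
lemmas T9 = T[THEN conjunct2, THEN conjunct2, THEN conjunct2, THEN conjunct2, THEN conjunct2, THEN conjunct2, THEN conjunct2, THEN conjunct2, THEN conjunct1]
lemmas T10 = T[THEN conjunct2, THEN conjunct2, THEN conjunct2, THEN conjunct2, THEN conjunct2, THEN conjunct2, THEN conjunct2, THEN conjunct2, THEN conjunct2, THEN conjunct1]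

lemma sh_af: "is_additive_functor C C (Sh C) (ShM C)"
  using T2 .

sublocale sh: addfun C C "Sh C" "ShM C"
  by (unfold_locales) (rule sh_af)

lemma sh_bij: "X \<in> Ob C \<Longrightarrow> Y \<in> Ob C \<Longrightarrow> bij_betw (ShM C) (hom C X Y) (hom C (Sh C X) (Sh C Y))"
  using T3 by simp

lemma sh_inj: assumes "f \<in> hom C X Y" "g \<in> hom C X Y" "ShM C f = ShM C g" shows "f = g"
proof -
  have "X \<in> Ob C" "Y \<in> Ob C" using assms hom_ob by blast+
  then have "inj_on (ShM C) (hom C X Y)" using sh_bij unfolding bij_betw_def by blast
  then show ?thesis using assms unfolding inj_on_def by blast
qed

lemma sh_surj: assumes "g \<in> hom C (Sh C X) (Sh C Y)" "X \<in> Ob C" "Y \<in> Ob C"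
  obtains f where "f \<in> hom C X Y" "ShM C f = g"
proof -
  have "g \<in> ShM C ` hom C X Y" using sh_bij[OF assms(2,3)] assms(1) unfolding bij_betw_def by simp
  then show ?thesis using that by blast
qed

lemma ess_surj: assumes "Y \<in> Ob C" obtains X f where "X \<in> Ob C" "f \<in> hom C (Sh C X) Y" "is_iso C f"
proof -
  have "\<exists>X\<in>Ob C. \<exists>f\<in>hom C (Sh C X) Y. is_iso C f" using T4 assms by simp
  then show ?thesis using that by blast
qed

lemma dist_tri: "t \<in> Dist C \<Longrightarrow> is_triangle C t"
  using T5 by blast

lemma dist_hom: assumes "(u,v,w) \<in> Dist C"
  shows "u \<in> hom C (Dom C u) (Cod C u)" "v \<in> hom C (Cod C u) (Cod C v)"
        "w \<in> hom C (Cod C v) (Sh C (Dom C u))"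
  using dist_tri[OF assms] unfolding is_triangle_def by (auto simp: hom_def)

lemma iso_closed: "t \<in> Dist C \<Longrightarrow> is_tri_morph C t t' (a, b, c) \<Longrightarrow>
  is_iso C a \<Longrightarrow> is_iso C b \<Longrightarrow> is_iso C c \<Longrightarrow> t' \<in> Dist C"
  using T6 by blast

lemma TR1: "X \<in> Ob C \<Longrightarrow> is_zero_obj C Z0 \<Longrightarrow> (Idm C X, Zer C X Z0, Zer C Z0 (Sh C X)) \<in> Dist C"
  using T7 by blast

lemma complete: "u \<in> Ar C \<Longrightarrow> \<exists>v w. (u, v, w) \<in> Dist C"
  using T8 by blast

lemma TR2: "(u, v, w) \<in> Dist C \<longleftrightarrow> (is_triangle C (u, v, w) \<and> (v, w, Neg C (ShM C u)) \<in> Dist C)"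
  using T9 by blast

lemma rot: "(u, v, w) \<in> Dist C \<Longrightarrow> (v, w, Neg C (ShM C u)) \<in> Dist C"
  using TR2 by blast

lemma TR3: "(u, v, w) \<in> Dist C \<Longrightarrow> (u', v', w') \<in> Dist C \<Longrightarrow>
          a \<in> hom C (Dom C u) (Dom C u') \<Longrightarrow> b \<in> hom C (Cod C u) (Cod C u') \<Longrightarrow>
          Cmp C b u = Cmp C u' a \<Longrightarrow>
          (\<exists>c. is_tri_morph C (u, v, w) (u', v', w') (a, b, c))"
  using T10 by blast

end



context addc begin
lemma hom_dom: "f \<in> hom C X Y \<Longrightarrow> Dom C f = X" and hom_cod: "f \<in> hom C X Y \<Longrightarrow> Cod C f = Y"
  and hom_ar: "f \<in> hom C X Y \<Longrightarrow> f \<in> Ar C"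
  by (simp_all add: hom_def)
end

context tri begin

lemma sh_zero: assumes z: "is_zero_obj C Z" shows "is_zero_obj C (Sh C Z)"
proof -
  have Z: "Z \<in> Ob C" using zero_ob z by blast
  have "Idm C (Sh C Z) = ShM C (Idm C Z)" using sh.F_id Z by simp
  also have "\<dots> = ShM C (Zer C Z Z)" using zero_id_zer z by simp
  also have "\<dots> = Zer C (Sh C Z) (Sh C Z)" using sh.F_zer Z by simp
  finally show ?thesis using id_zer_zero sh.F_ob Z by blast
qed

lemma sh_zero_rev: assumes X: "X \<in> Ob C" and z: "is_zero_obj C (Sh C X)" shows "is_zero_obj C X"
proof -
  have "ShM C (Idm C X) = Idm C (Sh C X)" using sh.F_id X by simp
  also have "\<dots> = Zer C (Sh C X) (Sh C X)" using zero_id_zer z by simp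
  also have "\<dots> = ShM C (Zer C X X)" using sh.F_zer X by simp
  finally have "Idm C X = Zer C X X" using sh_inj id_hom zer_hom X by blast
  then show ?thesis using id_zer_zero X by blast
qed

lemma dist_hom': assumes d: "(u,v,w) \<in> Dist C" and u: "u \<in> hom C X Y" and v: "v \<in> hom C Y Z"
  shows "w \<in> hom C Z (Sh C X)"
  using dist_hom(3)[OF d] hom_dom[OF u] hom_cod[OF v] by simp

lemma comp_zero: assumes d: "(u,v,w) \<in> Dist C" and u: "u \<in> hom C X Y" and v: "v \<in> hom C Y Z"
  shows "Cmp C v u = Zer C X Z"
proof -
  obtain Z0 where z0: "is_zero_obj C Z0" using ex_zero by blast
  have X: "X \<in> Ob C" using hom_ob u by blast
  have S: "(Idm C X, Zer C X Z0, Zer C Z0 (Sh C X)) \<in> Dist C" using TR1 X z0 by blast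
  have i: "Idm C X \<in> hom C X X" using id_hom X by blast
  have zz: "Zer C X Z0 \<in> hom C X Z0" using zer_hom X zero_ob z0 by blast
  obtain c where m: "is_tri_morph C (Idm C X, Zer C X Z0, Zer C Z0 (Sh C X)) (u, v, w) (Idm C X, u, c)"
    using TR3[OF S d, of "Idm C X" u] hom_dom[OF i] hom_cod[OF i] hom_dom[OF u] hom_cod[OF u] i u
      id_r[OF u] by force
  then have c: "c \<in> hom C Z0 Z" "Cmp C c (Zer C X Z0) = Cmp C v u"
    unfolding is_tri_morph_def using hom_cod[OF zz] hom_cod[OF v] by auto
  then show ?thesis using through_zero[OF z0 zz c(1)] by simp
qed

lemma wcoker: assumes d: "(u,v,w) \<in> Dist C" and u: "u \<in> hom C X Y" and v: "v \<in> hom C Y Z"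
  and x: "x \<in> hom C Y T" and e: "Cmp C x u = Zer C X T"
  obtains y where "y \<in> hom C Z T" "x = Cmp C y v"
proof -
  obtain Z0 where z0: "is_zero_obj C Z0" using ex_zero by blast
  have sz: "is_zero_obj C (Sh C Z0)" using sh_zero z0 by blast
  have T: "T \<in> Ob C" and X: "X \<in> Ob C" using hom_ob x u by blast+
  have Z0: "Z0 \<in> Ob C" using z0 zero_ob by blast
  have S: "(Idm C T, Zer C T (Sh C Z0), Zer C (Sh C Z0) (Sh C T)) \<in> Dist C" using TR1 T sz by blast
  have zT: "Zer C Z0 T \<in> hom C Z0 T" using zer_hom T Z0 by blast
  have "Neg C (ShM C (Zer C Z0 T)) \<in> hom C (Sh C Z0) (Sh C T)"
    using neg_hom sh.F_hom[OF zT] by blast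
  then have nz: "Neg C (ShM C (Zer C Z0 T)) = Zer C (Sh C Z0) (Sh C T)" using from_zero sz by blast
  have iT: "Idm C T \<in> hom C T T" using id_hom T by blast
  have zT2: "Zer C T (Sh C Z0) \<in> hom C T (Sh C Z0)" using zer_hom T zero_ob sz by blast
  have tri': "is_triangle C (Zer C Z0 T, Idm C T, Zer C T (Sh C Z0))"
    unfolding is_triangle_def using zT iT zT2 hom_dom[OF zT] hom_cod[OF zT] hom_ar[OF zT]
      hom_dom[OF iT] hom_cod[OF iT] by simp
  have t': "(Zer C Z0 T, Idm C T, Zer C T (Sh C Z0)) \<in> Dist C"
    using TR2[THEN iffD2, OF conjI[OF tri']] S nz by simp
  have zX: "Zer C X Z0 \<in> hom C X Z0" using zer_hom X Z0 by blast
  have eq: "Cmp C x u = Cmp C (Zer C Z0 T) (Zer C X Z0)" using e through_zero[OF z0 zX zT] by simp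
  have a1: "Zer C X Z0 \<in> hom C (Dom C u) (Dom C (Zer C Z0 T))" using zX hom_dom[OF u] hom_dom[OF zT] by simp
  have a2: "x \<in> hom C (Cod C u) (Cod C (Zer C Z0 T))" using x hom_cod[OF u] hom_cod[OF zT] by simp
  obtain c where m: "is_tri_morph C (u, v, w) (Zer C Z0 T, Idm C T, Zer C T (Sh C Z0)) (Zer C X Z0, x, c)"
    using TR3[OF d t' a1 a2 eq] by blast
  then have "c \<in> hom C Z T" "Cmp C c v = Cmp C (Idm C T) x"
    unfolding is_tri_morph_def using hom_cod[OF iT] hom_cod[OF v] by auto
  then show ?thesis using that id_l[OF x] by simp
qed

lemma wker: assumes d: "(u,v,w) \<in> Dist C" and u: "u \<in> hom C X Y" and v: "v \<in> hom C Y Z"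
  and x: "x \<in> hom C T Y" and e: "Cmp C v x = Zer C T Z"
  obtains y where "y \<in> hom C T X" "x = Cmp C u y"
proof -
  obtain Z0 where z0: "is_zero_obj C Z0" using ex_zero by blast
  have T: "T \<in> Ob C" and X: "X \<in> Ob C" and Y: "Y \<in> Ob C" and Z: "Z \<in> Ob C"
    using hom_ob x u v by blast+
  have Z0: "Z0 \<in> Ob C" using z0 zero_ob by blast
  have w: "w \<in> hom C Z (Sh C X)" using dist_hom'[OF d u v] .
  have S: "(Idm C T, Zer C T Z0, Zer C Z0 (Sh C T)) \<in> Dist C" using TR1 T z0 by blast
  have rS: "(Zer C T Z0, Zer C Z0 (Sh C T), Neg C (ShM C (Idm C T))) \<in> Dist C" using rot[OF S] .
  have rd: "(v, w, Neg C (ShM C u)) \<in> Dist C" using rot[OF d] .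
  have zT: "Zer C T Z0 \<in> hom C T Z0" using zer_hom T Z0 by blast
  have zZ: "Zer C Z0 Z \<in> hom C Z0 Z" using zer_hom Z Z0 by blast
  have zS: "Zer C Z0 (Sh C T) \<in> hom C Z0 (Sh C T)" using zer_hom sh.F_ob T Z0 by blast
  have eq: "Cmp C (Zer C Z0 Z) (Zer C T Z0) = Cmp C v x" using e through_zero[OF z0 zT zZ] by simp
  have a1: "x \<in> hom C (Dom C (Zer C T Z0)) (Dom C v)" using x hom_dom[OF v] hom_dom[OF zT] by simp
  have a2: "Zer C Z0 Z \<in> hom C (Cod C (Zer C T Z0)) (Cod C v)" using zZ hom_cod[OF v] hom_cod[OF zT] by simp
  obtain c where m: "is_tri_morph C (Zer C T Z0, Zer C Z0 (Sh C T), Neg C (ShM C (Idm C T)))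
       (v, w, Neg C (ShM C u)) (x, Zer C Z0 Z, c)"
    using TR3[OF rS rd a1 a2 eq] by blast
  then have c: "c \<in> hom C (Sh C T) (Sh C X)"
    and ce: "Cmp C (ShM C x) (Neg C (ShM C (Idm C T))) = Cmp C (Neg C (ShM C u)) c"
    unfolding is_tri_morph_def using hom_cod[OF zS] hom_cod[OF w] by auto
  obtain y where y: "y \<in> hom C T X" "ShM C y = c" using sh_surj[OF c T X] by blast
  have sx: "ShM C x \<in> hom C (Sh C T) (Sh C Y)" using sh.F_hom[OF x] .
  have su: "ShM C u \<in> hom C (Sh C X) (Sh C Y)" using sh.F_hom[OF u] .
  have iST: "Idm C (Sh C T) \<in> hom C (Sh C T) (Sh C T)" using id_hom sh.F_ob T by blast
  have "Cmp C (ShM C x) (Neg C (ShM C (Idm C T))) = Neg C (ShM C x)"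
    using sh.F_id[OF T] cmp_neg_r[OF iST sx] id_r[OF sx] by simp
  moreover have "Cmp C (Neg C (ShM C u)) c = Neg C (ShM C (Cmp C u y))"
    using y cmp_neg_l[OF c su] sh.F_cmp[OF y(1) u] by simp
  ultimately have "Neg C (ShM C x) = Neg C (ShM C (Cmp C u y))" using ce by simp
  then have "ShM C x = ShM C (Cmp C u y)"
    using neg_inj[OF sx sh.F_hom[OF cmp_hom[OF y(1) u]]] by simp
  then have "x = Cmp C u y" using sh_inj[OF x cmp_hom[OF y(1) u]] by simp
  then show ?thesis using that y(1) by blast
qed


lemma left_cancel: assumes d: "(u,v,w) \<in> Dist C" and u: "u \<in> hom C X Y" and v: "v \<in> hom C Y Z"
  and z0: "is_zero_obj C Z" and z: "z \<in> hom C T X" and e: "Cmp C u z = Zer C T Y"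
  shows "z = Zer C T X"
proof -
  have T: "T \<in> Ob C" and X: "X \<in> Ob C" and Y: "Y \<in> Ob C" using hom_ob z u by blast+
  have w: "w \<in> hom C Z (Sh C X)" using dist_hom'[OF d u v] .
  have r2: "(w, Neg C (ShM C u), Neg C (ShM C v)) \<in> Dist C" using rot[OF rot[OF d]] .
  have su: "ShM C u \<in> hom C (Sh C X) (Sh C Y)" using sh.F_hom[OF u] .
  have nu: "Neg C (ShM C u) \<in> hom C (Sh C X) (Sh C Y)" using neg_hom[OF su] .
  have sz: "ShM C z \<in> hom C (Sh C T) (Sh C X)" using sh.F_hom[OF z] .
  have "Cmp C (Neg C (ShM C u)) (ShM C z) = Neg C (ShM C (Cmp C u z))"
    using cmp_neg_l[OF sz su] sh.F_cmp[OF z u] by simp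
  also have "\<dots> = Zer C (Sh C T) (Sh C Y)" using e sh.F_zer[OF T Y] neg_zer sh.F_ob T Y by simp
  finally have ee: "Cmp C (Neg C (ShM C u)) (ShM C z) = Zer C (Sh C T) (Sh C Y)" .
  obtain y' where y': "y' \<in> hom C (Sh C T) Z" "ShM C z = Cmp C w y'"
    using wker[OF r2 w nu sz ee] by blast
  have "ShM C z = Zer C (Sh C T) (Sh C X)" using y' through_zero[OF z0 y'(1) w] by simp
  also have "\<dots> = ShM C (Zer C T X)" using sh.F_zer[OF T X] by simp
  finally show ?thesis using sh_inj[OF z zer_hom[OF T X]] by simp
qed

lemma cone_zero_iso: assumes d: "(u,v,w) \<in> Dist C" and u: "u \<in> hom C X Y" and v: "v \<in> hom C Y Z"
  and z0: "is_zero_obj C Z" shows "is_iso C u"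
proof -
  have X: "X \<in> Ob C" and Y: "Y \<in> Ob C" using hom_ob u by blast+
  have iY: "Idm C Y \<in> hom C Y Y" using id_hom Y .
  have iX: "Idm C X \<in> hom C X X" using id_hom X .
  have "Cmp C v (Idm C Y) = Zer C Y Z" using to_zero[OF z0 cmp_hom[OF iY v]] .
  then obtain y where y: "y \<in> hom C Y X" "Idm C Y = Cmp C u y" using wker[OF d u v iY] by blast
  have yu: "Cmp C y u \<in> hom C X X" using cmp_hom[OF u y(1)] .
  have ni: "Neg C (Idm C X) \<in> hom C X X" using neg_hom[OF iX] .
  define zz where "zz = Add C (Cmp C y u) (Neg C (Idm C X))"
  have zz: "zz \<in> hom C X X" unfolding zz_def using add_hom[OF yu ni] .
  have "Cmp C u zz = Add C (Cmp C u (Cmp C y u)) (Cmp C u (Neg C (Idm C X)))"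
    unfolding zz_def using dist_r[OF yu ni u] .
  also have "Cmp C u (Cmp C y u) = u" using assoc[OF u y(1) u] y(2) id_l[OF u] by simp
  also have "Cmp C u (Neg C (Idm C X)) = Neg C u" using cmp_neg_r[OF iX u] id_r[OF u] by simp
  also have "Add C u (Neg C u) = Zer C X Y" using add_neg[OF u] .
  finally have "zz = Zer C X X" using left_cancel[OF d u v z0 zz] by blast
  then have "Cmp C y u = Idm C X" using diff_zero[OF yu iX] unfolding zz_def by blast
  then show ?thesis using isoI[OF u y(1)] y(2) by simp
qed

lemma iso_cone_zero: assumes d: "(u,v,w) \<in> Dist C" and u: "u \<in> hom C X Y" and v: "v \<in> hom C Y Z"
  and i: "is_iso C u" shows "is_zero_obj C Z"
proof -
  have X: "X \<in> Ob C" and Y: "Y \<in> Ob C" and Z: "Z \<in> Ob C" using hom_ob u v by blast+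
  obtain g where g: "g \<in> hom C Y X" "Cmp C g u = Idm C X" "Cmp C u g = Idm C Y"
    using iso_inv[OF i u] by blast
  have w: "w \<in> hom C Z (Sh C X)" using dist_hom'[OF d u v] .
  have "v = Cmp C v (Cmp C u g)" using g(3) id_r[OF v] by simp
  also have "\<dots> = Cmp C (Cmp C v u) g" using assoc[OF g(1) u v] .
  also have "\<dots> = Zer C Y Z" using comp_zero[OF d u v] cmp_zer_l[OF g(1) Z] by simp
  finally have v0: "v = Zer C Y Z" .
  have r1: "(v, w, Neg C (ShM C u)) \<in> Dist C" using rot[OF d] .
  have r2: "(w, Neg C (ShM C u), Neg C (ShM C v)) \<in> Dist C" using rot[OF r1] .
  have su: "ShM C u \<in> hom C (Sh C X) (Sh C Y)" using sh.F_hom[OF u] .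
  have nu: "Neg C (ShM C u) \<in> hom C (Sh C X) (Sh C Y)" using neg_hom[OF su] .
  have "Cmp C (Neg C (ShM C u)) w = Zer C Z (Sh C Y)" using comp_zero[OF r2 w nu] .
  then have "Neg C (Cmp C (ShM C u) w) = Zer C Z (Sh C Y)" using cmp_neg_l[OF w su] by simp
  then have "Cmp C (ShM C u) w = Zer C Z (Sh C Y)" using neg_eq_zer cmp_hom[OF w su] by blast
  then have w0: "w = Zer C Z (Sh C X)" using iso_cancel_zero[OF su sh.F_iso[OF u i] w] by blast
  have iZ: "Idm C Z \<in> hom C Z Z" using id_hom Z .
  have "Cmp C w (Idm C Z) = Zer C Z (Sh C X)" using id_r[OF w] w0 by simp
  then obtain y where y: "y \<in> hom C Z Y" "Idm C Z = Cmp C v y" using wker[OF r1 v w iZ] by blast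
  then have "Idm C Z = Zer C Z Z" using v0 cmp_zer_l[OF y(1) Z] by simp
  then show ?thesis using id_zer_zero Z by blast
qed

lemma first_zero_mid_iso: assumes d: "(u,v,w) \<in> Dist C" and u: "u \<in> hom C X Y" and v: "v \<in> hom C Y Z"
  and z0: "is_zero_obj C X" shows "is_iso C v"
  using cone_zero_iso[OF rot[OF d] v dist_hom'[OF d u v] sh_zero[OF z0]] .

lemma mid_iso_first_zero: assumes d: "(u,v,w) \<in> Dist C" and u: "u \<in> hom C X Y" and v: "v \<in> hom C Y Z"
  and i: "is_iso C v" shows "is_zero_obj C X"
proof -
  have "is_zero_obj C (Sh C X)" using iso_cone_zero[OF rot[OF d] v dist_hom'[OF d u v] i] .
  then show ?thesis using sh_zero_rev hom_ob(1)[OF u] by blast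
qed

lemma iso_sh_reflect: assumes f: "f \<in> hom C X Y" and i: "is_iso C (ShM C f)" shows "is_iso C f"
proof -
  have X: "X \<in> Ob C" and Y: "Y \<in> Ob C" using hom_ob f by blast+
  have sf: "ShM C f \<in> hom C (Sh C X) (Sh C Y)" using sh.F_hom[OF f] .
  obtain h' where h': "h' \<in> hom C (Sh C Y) (Sh C X)" "Cmp C h' (ShM C f) = Idm C (Sh C X)"
    "Cmp C (ShM C f) h' = Idm C (Sh C Y)" using iso_inv[OF i sf] by blast
  obtain h where h: "h \<in> hom C Y X" "ShM C h = h'" using sh_surj[OF h'(1) Y X] by blast
  have "ShM C (Cmp C h f) = ShM C (Idm C X)" using sh.F_cmp[OF f h(1)] h h'(2) sh.F_id[OF X] by simp
  then have 1: "Cmp C h f = Idm C X" using sh_inj[OF cmp_hom[OF f h(1)] id_hom[OF X]] by blast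
  have "ShM C (Cmp C f h) = ShM C (Idm C Y)" using sh.F_cmp[OF h(1) f] h h'(3) sh.F_id[OF Y] by simp
  then have 2: "Cmp C f h = Idm C Y" using sh_inj[OF cmp_hom[OF h(1) f] id_hom[OF Y]] by blast
  show ?thesis using isoI[OF f h(1) 1 2] .
qed

lemma back_rot: assumes u: "u \<in> hom C X Y"
  obtains D k c where "k \<in> hom C D X" "(k, u, c) \<in> Dist C"
proof -
  have X: "X \<in> Ob C" and Y: "Y \<in> Ob C" using hom_ob u by blast+
  obtain p q where d: "(u, p, q) \<in> Dist C" using complete hom_ar[OF u] by blast
  define P where "P = Cod C p"
  have p: "p \<in> hom C Y P" using dist_hom(2)[OF d] hom_cod[OF u] unfolding P_def by simp
  have q: "q \<in> hom C P (Sh C X)" using dist_hom'[OF d u p] .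
  have P: "P \<in> Ob C" using hom_ob p by blast
  obtain D \<phi> where D: "D \<in> Ob C" and ph: "\<phi> \<in> hom C (Sh C D) P" and phi: "is_iso C \<phi>"
    using ess_surj[OF P] by blast
  define \<psi> where "\<psi> = inv_arr C \<phi>"
  have ps: "\<psi> \<in> hom C P (Sh C D)" "Cmp C \<psi> \<phi> = Idm C (Sh C D)" "Cmp C \<phi> \<psi> = Idm C P"
    using iso_inv[OF phi ph] unfolding \<psi>_def by auto
  have psi: "is_iso C \<psi>" using inv_iso[OF phi ph] unfolding \<psi>_def .
  have pp: "Cmp C \<psi> p \<in> hom C Y (Sh C D)" using cmp_hom[OF p ps(1)] .
  have qp: "Cmp C q \<phi> \<in> hom C (Sh C D) (Sh C X)" using cmp_hom[OF ph q] .
  have iX: "Idm C X \<in> hom C X X" using id_hom[OF X] .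
  have iY: "Idm C Y \<in> hom C Y Y" using id_hom[OF Y] .
  have t1: "is_triangle C (u, p, q)" using dist_tri[OF d] .
  have t2: "is_triangle C (u, Cmp C \<psi> p, Cmp C q \<phi>)"
    unfolding is_triangle_def using hom_ar[OF u] hom_cod[OF u] hom_dom[OF u] pp qp
      hom_cod[OF pp] hom_dom[OF pp] by simp
  have e3: "Cmp C (ShM C (Idm C X)) q = Cmp C (Cmp C q \<phi>) \<psi>"
  proof -
    have "Cmp C (ShM C (Idm C X)) q = q" using sh.F_id[OF X] id_l[OF q] by simp
    moreover have "Cmp C (Cmp C q \<phi>) \<psi> = q" using assoc[OF ps(1) ph q] ps(3) id_r[OF q] by simp
    ultimately show ?thesis by simp
  qed
  have m: "is_tri_morph C (u, p, q) (u, Cmp C \<psi> p, Cmp C q \<phi>) (Idm C X, Idm C Y, \<psi>)"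
    unfolding is_tri_morph_def using t1 t2 iX iY ps(1) e3 hom_dom[OF u] hom_cod[OF u]
      hom_cod[OF p] hom_cod[OF pp] id_l[OF u] id_r[OF u] id_r[OF pp] by simp
  have d2: "(u, Cmp C \<psi> p, Cmp C q \<phi>) \<in> Dist C"
    using iso_closed[OF d m id_iso[OF X] id_iso[OF Y] psi] .
  obtain k0 where k0: "k0 \<in> hom C D X" "ShM C k0 = Cmp C q \<phi>" using sh_surj[OF qp D X] by blast
  have k: "Neg C k0 \<in> hom C D X" using neg_hom[OF k0(1)] .
  have nn: "Neg C (ShM C (Neg C k0)) = Cmp C q \<phi>"
    using sh.F_neg[OF k0(1)] neg_neg[OF sh.F_hom[OF k0(1)]] k0(2) by simp
  have t3: "is_triangle C (Neg C k0, u, Cmp C \<psi> p)"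
    unfolding is_triangle_def using hom_ar[OF k] hom_cod[OF k] hom_dom[OF k] u hom_dom[OF u]
      hom_cod[OF u] pp by simp
  have "(Neg C k0, u, Cmp C \<psi> p) \<in> Dist C"
    using TR2[THEN iffD2, OF conjI[OF t3]] d2 nn by simp
  then show ?thesis using that k by blast
qed

end



locale trifun = A: tri A + B: tri B
  for A :: "('o,'m,'x) tricat_scheme" and B :: "('p,'n,'y) tricat_scheme" +
  fixes Fo :: "'o \<Rightarrow> 'p" and Fm :: "'m \<Rightarrow> 'n" and \<xi> :: "'o \<Rightarrow> 'n"
  assumes tf: "is_triangle_functor A B Fo Fm \<xi>"
begin

lemma af: "is_additive_functor A B Fo Fm"
  using tf unfolding is_triangle_functor_def by blast

sublocale F: addfun A B Fo Fm
  by unfold_locales (rule af)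

lemma xi: "X \<in> Ob A \<Longrightarrow> \<xi> X \<in> hom B (Fo (Sh A X)) (Sh B (Fo X)) \<and> is_iso B (\<xi> X)"
  using tf unfolding is_triangle_functor_def by blast

lemma xi_nat: assumes "f \<in> hom A X Y"
  shows "Cmp B (\<xi> Y) (Fm (ShM A f)) = Cmp B (ShM B (Fm f)) (\<xi> X)"
proof -
  have "X \<in> Ob A" "Y \<in> Ob A" using assms A.hom_ob by blast+
  then show ?thesis using tf assms unfolding is_triangle_functor_def by blast
qed

lemma F_dist0: "(u, v, w) \<in> Dist A \<Longrightarrow> (Fm u, Fm v, Cmp B (\<xi> (Dom A u)) (Fm w)) \<in> Dist B"
  using tf unfolding is_triangle_functor_def by blast

lemma F_dist: assumes d: "(u, v, w) \<in> Dist A" and u: "u \<in> hom A X Y"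
  shows "(Fm u, Fm v, Cmp B (\<xi> X) (Fm w)) \<in> Dist B"
  using F_dist0[OF d] A.hom_dom[OF u] by simp

lemma qi_imp: assumes q: "quasi_iso A (in_Ker B Fo) s" shows "is_iso B (Fm s)"
proof -
  obtain v w where d: "(s, v, w) \<in> Dist A" and k: "in_Ker B Fo (Cod A v)"
    using q unfolding quasi_iso_def by blast
  have s: "s \<in> hom A (Dom A s) (Cod A s)" using A.dist_hom(1)[OF d] .
  have v: "v \<in> hom A (Cod A s) (Cod A v)" using A.dist_hom(2)[OF d] .
  show ?thesis using B.cone_zero_iso[OF F_dist[OF d s] F.F_hom[OF s] F.F_hom[OF v]] k
    unfolding in_Ker_def by blast
qed

lemma qi_of: assumes s: "s \<in> Ar A" and i: "is_iso B (Fm s)" shows "quasi_iso A (in_Ker B Fo) s"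
proof -
  obtain v w where d: "(s, v, w) \<in> Dist A" using A.complete s by blast
  have s: "s \<in> hom A (Dom A s) (Cod A s)" using A.dist_hom(1)[OF d] .
  have v: "v \<in> hom A (Cod A s) (Cod A v)" using A.dist_hom(2)[OF d] .
  have "is_zero_obj B (Fo (Cod A v))"
    using B.iso_cone_zero[OF F_dist[OF d s] F.F_hom[OF s] F.F_hom[OF v] i] .
  then show ?thesis unfolding quasi_iso_def in_Ker_def using d s A.hom_ar by blast
qed

lemma WSM_obj: assumes W: "WSM A B Fo Fm" shows "objective A B Fo Fm"
  unfolding objective_def
proof (intro ballI impI)
  fix f assume fa: "f \<in> Ar A" and f0: "Fm f = Zer B (Fo (Dom A f)) (Fo (Cod A f))"
  define X Y where "X = Dom A f" and "Y = Cod A f"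
  have f: "f \<in> hom A X Y" using A.ar_hom[OF fa] unfolding X_def Y_def .
  have X: "X \<in> Ob A" and Y: "Y \<in> Ob A" using A.hom_ob f by blast+
  obtain g h where d: "(f, g, h) \<in> Dist A" using A.complete fa by blast
  define Z where "Z = Cod A g"
  have g: "g \<in> hom A Y Z" using A.dist_hom(2)[OF d] A.hom_cod[OF f] unfolding Z_def by simp
  have Z: "Z \<in> Ob A" using A.hom_ob g by blast
  have Fd: "(Fm f, Fm g, Cmp B (\<xi> X) (Fm h)) \<in> Dist B" using F_dist[OF d f] .
  have Ff: "Fm f \<in> hom B (Fo X) (Fo Y)" using F.F_hom[OF f] .
  have Fg: "Fm g \<in> hom B (Fo Y) (Fo Z)" using F.F_hom[OF g] .
  have iY: "Idm B (Fo Y) \<in> hom B (Fo Y) (Fo Y)" using B.id_hom F.F_ob Y by blast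
  have "Cmp B (Idm B (Fo Y)) (Fm f) = Zer B (Fo X) (Fo Y)"
    using B.id_l[OF Ff] f0 unfolding X_def Y_def by simp
  then obtain r where r: "r \<in> hom B (Fo Z) (Fo Y)" "Idm B (Fo Y) = Cmp B r (Fm g)"
    using B.wcoker[OF Fd Ff Fg iY] by blast
  have "is_split_mono B (Fm g)"
    unfolding is_split_mono_def using B.hom_ar[OF Fg] B.hom_dom[OF Fg] B.hom_cod[OF Fg] r by auto
  moreover have "g \<in> Ar A" using A.hom_ar[OF g] .
  ultimately have "\<exists>X'\<in>Ob A. \<exists>u'\<in>hom A (Cod A g) X'. is_iso B (Fm (Cmp A u' g))"
    using W unfolding WSM_def by blast
  then obtain X' g' where X': "X' \<in> Ob A" and g': "g' \<in> hom A Z X'"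
    and gi: "is_iso B (Fm (Cmp A g' g))"
    unfolding A.hom_cod[OF g] by blast
  have gg: "Cmp A g' g \<in> hom A Y X'" using A.cmp_hom[OF g g'] .
  obtain K k c where k: "k \<in> hom A K Y" and dk: "(k, Cmp A g' g, c) \<in> Dist A"
    using A.back_rot[OF gg] by blast
  have kz: "is_zero_obj B (Fo K)"
    using B.mid_iso_first_zero[OF F_dist[OF dk k] F.F_hom[OF k] F.F_hom[OF gg] gi] .
  have "Cmp A (Cmp A g' g) f = Cmp A g' (Cmp A g f)" using A.assoc[OF f g g'] by simp
  also have "\<dots> = Zer A X X'" using A.comp_zero[OF d f g] A.cmp_zer_r[OF g' X] by simp
  finally obtain m where m: "m \<in> hom A X K" "f = Cmp A k m" using A.wker[OF dk k gg f] by blast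
  have K: "K \<in> Ob A" using A.hom_ob k by blast
  show "\<exists>K\<in>Ob A. \<exists>g\<in>hom A (Dom A f) K. \<exists>h\<in>hom A K (Cod A f). f = Cmp A h g \<and> is_zero_obj B (Fo K)"
    using K m k kz unfolding X_def Y_def by blast
qed


lemma obj_WSM: assumes O: "objective A B Fo Fm" shows "WSM A B Fo Fm"
  unfolding WSM_def
proof (intro ballI impI)
  fix u assume ua: "u \<in> Ar A" and sm: "is_split_mono B (Fm u)"
  define X Y where "X = Dom A u" and "Y = Cod A u"
  have u: "u \<in> hom A X Y" using A.ar_hom[OF ua] unfolding X_def Y_def .
  have X: "X \<in> Ob A" and Y: "Y \<in> Ob A" using A.hom_ob u by blast+
  have Fu: "Fm u \<in> hom B (Fo X) (Fo Y)" using F.F_hom[OF u] .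
  obtain r where r: "r \<in> hom B (Fo Y) (Fo X)" "Cmp B r (Fm u) = Idm B (Fo X)"
    using sm unfolding is_split_mono_def B.hom_dom[OF Fu] B.hom_cod[OF Fu] by blast
  obtain v w where d: "(u, v, w) \<in> Dist A" using A.complete ua by blast
  define Z where "Z = Cod A v"
  have v: "v \<in> hom A Y Z" using A.dist_hom(2)[OF d] A.hom_cod[OF u] unfolding Z_def by simp
  have w: "w \<in> hom A Z (Sh A X)" using A.dist_hom'[OF d u v] .
  have Z: "Z \<in> Ob A" using A.hom_ob v by blast
  have Fd: "(Fm u, Fm v, Cmp B (\<xi> X) (Fm w)) \<in> Dist B" using F_dist[OF d u] .
  have xX: "\<xi> X \<in> hom B (Fo (Sh A X)) (Sh B (Fo X))" "is_iso B (\<xi> X)" using xi X by blast+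
  have Fw: "Fm w \<in> hom B (Fo Z) (Fo (Sh A X))" using F.F_hom[OF w] .
  define W where "W = Cmp B (\<xi> X) (Fm w)"
  have Wh: "W \<in> hom B (Fo Z) (Sh B (Fo X))" unfolding W_def using B.cmp_hom[OF Fw xX(1)] .
  have Fv: "Fm v \<in> hom B (Fo Y) (Fo Z)" using F.F_hom[OF v] .
  have rFd: "(Fm v, W, Neg B (ShM B (Fm u))) \<in> Dist B" using B.rot[OF Fd] unfolding W_def .
  have sFu: "ShM B (Fm u) \<in> hom B (Sh B (Fo X)) (Sh B (Fo Y))" using B.sh.F_hom[OF Fu] .
  have nsFu: "Neg B (ShM B (Fm u)) \<in> hom B (Sh B (Fo X)) (Sh B (Fo Y))" using B.neg_hom[OF sFu] .
  have "Cmp B (Neg B (ShM B (Fm u))) W = Zer B (Fo Z) (Sh B (Fo Y))" using B.comp_zero[OF B.rot[OF rFd] Wh nsFu] .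
  then have "Neg B (Cmp B (ShM B (Fm u)) W) = Zer B (Fo Z) (Sh B (Fo Y))" using B.cmp_neg_l[OF Wh sFu] by simp
  then have e1: "Cmp B (ShM B (Fm u)) W = Zer B (Fo Z) (Sh B (Fo Y))"
    using B.neg_eq_zer B.cmp_hom[OF Wh sFu] by blast
  have FX: "Fo X \<in> Ob B" using F.F_ob X .
  have sr: "ShM B r \<in> hom B (Sh B (Fo Y)) (Sh B (Fo X))" using B.sh.F_hom[OF r(1)] .
  have "W = Cmp B (Idm B (Sh B (Fo X))) W" using B.id_l[OF Wh] by simp
  also have "\<dots> = Cmp B (ShM B (Cmp B r (Fm u))) W" using r(2) B.sh.F_id[OF FX] by simp
  also have "\<dots> = Cmp B (Cmp B (ShM B r) (ShM B (Fm u))) W" using B.sh.F_cmp[OF Fu r(1)] by simp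
  also have "\<dots> = Cmp B (ShM B r) (Cmp B (ShM B (Fm u)) W)" using B.assoc[OF Wh sFu sr] by simp
  also have "\<dots> = Zer B (Fo Z) (Sh B (Fo X))" using e1 B.cmp_zer_r[OF sr] F.F_ob[OF Z] by simp
  finally have "Cmp B (\<xi> X) (Fm w) = Zer B (Fo Z) (Sh B (Fo X))" unfolding W_def .
  then have "Fm w = Zer B (Fo Z) (Fo (Sh A X))" using B.iso_cancel_zero[OF xX(1) xX(2) Fw] by blast
  then have "Fm w = Zer B (Fo (Dom A w)) (Fo (Cod A w))" using A.hom_dom[OF w] A.hom_cod[OF w] by simp
  then have "\<exists>K\<in>Ob A. \<exists>g\<in>hom A (Dom A w) K. \<exists>h\<in>hom A K (Cod A w). w = Cmp A h g \<and> is_zero_obj B (Fo K)"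
    using O A.hom_ar[OF w] unfolding objective_def by blast
  then obtain K g h where K: "K \<in> Ob A" and g: "g \<in> hom A Z K" and h: "h \<in> hom A K (Sh A X)"
    and wgh: "w = Cmp A h g" and kz: "is_zero_obj B (Fo K)"
    unfolding A.hom_dom[OF w] A.hom_cod[OF w] by blast
  obtain p q where dh: "(h, p, q) \<in> Dist A" using A.complete A.hom_ar[OF h] by blast
  define P where "P = Cod A p"
  have p: "p \<in> hom A (Sh A X) P" using A.dist_hom(2)[OF dh] A.hom_cod[OF h] unfolding P_def by simp
  have P: "P \<in> Ob A" using A.hom_ob p by blast
  have SX: "Sh A X \<in> Ob A" using A.sh.F_ob X .
  have "Cmp A p w = Cmp A (Cmp A p h) g" using wgh A.assoc[OF g h p] by simp
  also have "\<dots> = Zer A Z P" using A.comp_zero[OF dh h p] A.cmp_zer_l[OF g P] by simp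
  finally have pw: "Cmp A p w = Zer A Z P" .
  obtain D \<phi> where D: "D \<in> Ob A" and ph: "\<phi> \<in> hom A (Sh A D) P" and phi: "is_iso A \<phi>"
    using A.ess_surj[OF P] by blast
  define \<psi> where "\<psi> = inv_arr A \<phi>"
  have ps: "\<psi> \<in> hom A P (Sh A D)" using A.iso_inv[OF phi ph] unfolding \<psi>_def by auto
  have psi: "is_iso A \<psi>" using A.inv_iso[OF phi ph] unfolding \<psi>_def .
  have pp: "Cmp A \<psi> p \<in> hom A (Sh A X) (Sh A D)" using A.cmp_hom[OF p ps] .
  obtain a where a: "a \<in> hom A X D" "ShM A a = Cmp A \<psi> p" using A.sh_surj[OF pp X D] by blast
  have sa: "ShM A a \<in> hom A (Sh A X) (Sh A D)" using A.sh.F_hom[OF a(1)] .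
  have "Cmp A (ShM A a) w = Cmp A \<psi> (Cmp A p w)" using a(2) A.assoc[OF w p ps] by simp
  also have "\<dots> = Zer A Z (Sh A D)" using pw A.cmp_zer_r[OF ps Z] by simp
  finally have aw: "Cmp A (ShM A a) w = Zer A Z (Sh A D)" .
  have r2: "(w, Neg A (ShM A u), Neg A (ShM A v)) \<in> Dist A" using A.rot[OF A.rot[OF d]] .
  have su: "ShM A u \<in> hom A (Sh A X) (Sh A Y)" using A.sh.F_hom[OF u] .
  have nsu: "Neg A (ShM A u) \<in> hom A (Sh A X) (Sh A Y)" using A.neg_hom[OF su] .
  obtain y where y: "y \<in> hom A (Sh A Y) (Sh A D)" "ShM A a = Cmp A y (Neg A (ShM A u))"
    using A.wcoker[OF r2 w nsu sa aw] by blast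
  obtain m where m: "m \<in> hom A Y D" "ShM A m = y" using A.sh_surj[OF y(1) Y D] by blast
  have mu: "Cmp A m u \<in> hom A X D" using A.cmp_hom[OF u m(1)] .
  have "ShM A a = Neg A (Cmp A (ShM A m) (ShM A u))" using y(2) m(2) A.cmp_neg_r[OF su y(1)] by simp
  also have "\<dots> = ShM A (Neg A (Cmp A m u))" using A.sh.F_cmp[OF u m(1)] A.sh.F_neg[OF mu] by simp
  finally have "a = Neg A (Cmp A m u)" using A.sh_inj[OF a(1) A.neg_hom[OF mu]] by blast
  then have au: "a = Cmp A (Neg A m) u" using A.cmp_neg_l[OF u m(1)] by simp
  have u': "Neg A m \<in> hom A Y D" using A.neg_hom[OF m(1)] .
  have Fh: "Fm h \<in> hom B (Fo K) (Fo (Sh A X))" using F.F_hom[OF h] .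
  have Fp: "Fm p \<in> hom B (Fo (Sh A X)) (Fo P)" using F.F_hom[OF p] .
  have Fpi: "is_iso B (Fm p)" using B.first_zero_mid_iso[OF F_dist[OF dh h] Fh Fp kz] .
  have Fps: "Fm \<psi> \<in> hom B (Fo P) (Fo (Sh A D))" using F.F_hom[OF ps] .
  have "is_iso B (Cmp B (Fm \<psi>) (Fm p))" using B.iso_cmp[OF Fp Fps Fpi F.F_iso[OF ps psi]] .
  then have i1: "is_iso B (Fm (ShM A a))" using a(2) F.F_cmp[OF p ps] by simp
  have xD: "\<xi> D \<in> hom B (Fo (Sh A D)) (Sh B (Fo D))" "is_iso B (\<xi> D)" using xi D by blast+
  have Fsa: "Fm (ShM A a) \<in> hom B (Fo (Sh A X)) (Fo (Sh A D))" using F.F_hom[OF sa] .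
  have Fa: "Fm a \<in> hom B (Fo X) (Fo D)" using F.F_hom[OF a(1)] .
  have sFa: "ShM B (Fm a) \<in> hom B (Sh B (Fo X)) (Sh B (Fo D))" using B.sh.F_hom[OF Fa] .
  define ix where "ix = inv_arr B (\<xi> X)"
  have ix: "ix \<in> hom B (Sh B (Fo X)) (Fo (Sh A X))" "Cmp B (\<xi> X) ix = Idm B (Sh B (Fo X))"
    using B.iso_inv[OF xX(2) xX(1)] unfolding ix_def by auto
  have ixi: "is_iso B ix" using B.inv_iso[OF xX(2) xX(1)] unfolding ix_def .
  have c1: "Cmp B (\<xi> D) (Fm (ShM A a)) \<in> hom B (Fo (Sh A X)) (Sh B (Fo D))" using B.cmp_hom[OF Fsa xD(1)] .
  have "Cmp B (Cmp B (\<xi> D) (Fm (ShM A a))) ix = Cmp B (Cmp B (ShM B (Fm a)) (\<xi> X)) ix"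
    using xi_nat[OF a(1)] by simp
  also have "\<dots> = Cmp B (ShM B (Fm a)) (Cmp B (\<xi> X) ix)" using B.assoc[OF ix(1) xX(1) sFa] by simp
  also have "\<dots> = ShM B (Fm a)" using ix(2) B.id_r[OF sFa] by simp
  finally have eqs: "Cmp B (Cmp B (\<xi> D) (Fm (ShM A a))) ix = ShM B (Fm a)" .
  have "is_iso B (Cmp B (Cmp B (\<xi> D) (Fm (ShM A a))) ix)"
    using B.iso_cmp[OF ix(1) c1 ixi B.iso_cmp[OF Fsa xD(1) i1 xD(2)]] .
  then have "is_iso B (Fm a)" using B.iso_sh_reflect[OF Fa] eqs by simp
  then show "\<exists>X'\<in>Ob A. \<exists>u'\<in>hom A (Cod A u) X'. is_iso B (Fm (Cmp A u' u))"
    using D u' au unfolding Y_def[symmetric] by blast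
qed


lemma faith_obj: assumes Fa: "induced_faithful A B Fo Fm" shows "objective A B Fo Fm"
  unfolding objective_def
proof (intro ballI impI)
  fix f assume fa: "f \<in> Ar A" and f0: "Fm f = Zer B (Fo (Dom A f)) (Fo (Cod A f))"
  define X Y where "X = Dom A f" and "Y = Cod A f"
  have f: "f \<in> hom A X Y" using A.ar_hom[OF fa] unfolding X_def Y_def .
  have X: "X \<in> Ob A" and Y: "Y \<in> Ob A" using A.hom_ob f by blast+
  have iX: "Idm A X \<in> hom A X X" using A.id_hom[OF X] .
  have z: "Zer A X Y \<in> hom A X Y" using A.zer_hom[OF X Y] .
  have qi: "quasi_iso A (in_Ker B Fo) (Idm A X)"
    using qi_of[OF A.hom_ar[OF iX]] F.F_id[OF X] B.id_iso F.F_ob[OF X] by simp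
  have r1: "is_roof A (in_Ker B Fo) X Y (Idm A X, f)"
    unfolding is_roof_def using qi A.hom_cod[OF iX] A.hom_dom[OF iX] f by simp
  have r2: "is_roof A (in_Ker B Fo) X Y (Idm A X, Zer A X Y)"
    unfolding is_roof_def using qi A.hom_cod[OF iX] A.hom_dom[OF iX] z by simp
  have "Fm f = Fm (Zer A X Y)" using f0 F.F_zer[OF X Y] unfolding X_def Y_def by simp
  then have "induced_on_roof B Fm (Idm A X, f) = induced_on_roof B Fm (Idm A X, Zer A X Y)"
    unfolding induced_on_roof_def by simp
  then have "roof_equiv A (in_Ker B Fo) (Idm A X, f) (Idm A X, Zer A X Y)"
    using Fa X Y r1 r2 unfolding induced_faithful_def by blast
  then obtain W t t' where W: "W \<in> Ob A" and t: "t \<in> hom A W X" and t': "t' \<in> hom A W X"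
    and e1: "Cmp A (Idm A X) t = Cmp A (Idm A X) t'" and q: "quasi_iso A (in_Ker B Fo) (Cmp A (Idm A X) t)"
    and e2: "Cmp A f t = Cmp A (Zer A X Y) t'"
    unfolding roof_equiv_def prod.case A.hom_dom[OF iX] by blast
  have q': "quasi_iso A (in_Ker B Fo) t" using q A.id_l[OF t] by simp
  have ft: "Cmp A f t = Zer A W Y" using e2 A.cmp_zer_l[OF t' Y] by simp
  obtain v w where d: "(t, v, w) \<in> Dist A" and k: "in_Ker B Fo (Cod A v)"
    using q' unfolding quasi_iso_def by blast
  have v: "v \<in> hom A X (Cod A v)" using A.dist_hom(2)[OF d] A.hom_cod[OF t] by simp
  obtain y where y: "y \<in> hom A (Cod A v) Y" "f = Cmp A y v" using A.wcoker[OF d t v f ft] by blast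
  have K: "Cod A v \<in> Ob A" using A.hom_ob v by blast
  show "\<exists>K\<in>Ob A. \<exists>g\<in>hom A (Dom A f) K. \<exists>h\<in>hom A K (Cod A f). f = Cmp A h g \<and> is_zero_obj B (Fo K)"
    using K v y k unfolding in_Ker_def X_def[symmetric] Y_def[symmetric] by blast
qed

lemma obj_faith: assumes O: "objective A B Fo Fm" shows "induced_faithful A B Fo Fm"
  unfolding induced_faithful_def
proof (intro ballI allI impI, elim conjE)
  fix X Y r r' assume X: "X \<in> Ob A" and Y: "Y \<in> Ob A"
    and rr: "is_roof A (in_Ker B Fo) X Y r" and rr': "is_roof A (in_Ker B Fo) X Y r'"
    and eq: "induced_on_roof B Fm r = induced_on_roof B Fm r'"
  obtain s f where r: "r = (s, f)" by (cases r)
  obtain s' f' where r': "r' = (s', f')" by (cases r')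
  define Z Z' where "Z = Dom A s" and "Z' = Dom A s'"
  have qs: "quasi_iso A (in_Ker B Fo) s" and sX: "Cod A s = X" and f: "f \<in> hom A Z Y"
    using rr unfolding r is_roof_def Z_def by auto
  have qs': "quasi_iso A (in_Ker B Fo) s'" and sX': "Cod A s' = X" and f': "f' \<in> hom A Z' Y"
    using rr' unfolding r' is_roof_def Z'_def by auto
  have s: "s \<in> hom A Z X" using qs sX unfolding quasi_iso_def hom_def Z_def by auto
  have s': "s' \<in> hom A Z' X" using qs' sX' unfolding quasi_iso_def hom_def Z'_def by auto
  have Fsi: "is_iso B (Fm s)" and Fsi': "is_iso B (Fm s')" using qi_imp qs qs' by blast+
  have Fs: "Fm s \<in> hom B (Fo Z) (Fo X)" using F.F_hom[OF s] .
  have Fs': "Fm s' \<in> hom B (Fo Z') (Fo X)" using F.F_hom[OF s'] .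
  have Ff: "Fm f \<in> hom B (Fo Z) (Fo Y)" using F.F_hom[OF f] .
  have Ff': "Fm f' \<in> hom B (Fo Z') (Fo Y)" using F.F_hom[OF f'] .
  define i i' where "i = inv_arr B (Fm s)" and "i' = inv_arr B (Fm s')"
  have i: "i \<in> hom B (Fo X) (Fo Z)" "Cmp B i (Fm s) = Idm B (Fo Z)"
    using B.iso_inv[OF Fsi Fs] unfolding i_def by auto
  have i': "i' \<in> hom B (Fo X) (Fo Z')" "Cmp B i' (Fm s') = Idm B (Fo Z')"
    using B.iso_inv[OF Fsi' Fs'] unfolding i'_def by auto
  have eq2: "Cmp B (Fm f) i = Cmp B (Fm f') i'" using eq unfolding r r' induced_on_roof_def i_def i'_def by simp
  \<comment> \<open>Ore condition\<close>
  obtain v w where d: "(s, v, w) \<in> Dist A" using A.complete A.hom_ar[OF s] by blast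
  define P where "P = Cod A v"
  have v: "v \<in> hom A X P" using A.dist_hom(2)[OF d] A.hom_cod[OF s] unfolding P_def by simp
  have Pz: "is_zero_obj B (Fo P)" using B.iso_cone_zero[OF F_dist[OF d s] Fs F.F_hom[OF v] Fsi] .
  have vs': "Cmp A v s' \<in> hom A Z' P" using A.cmp_hom[OF s' v] .
  obtain W t' c where t': "t' \<in> hom A W Z'" and dt': "(t', Cmp A v s', c) \<in> Dist A"
    using A.back_rot[OF vs'] by blast
  have W: "W \<in> Ob A" using A.hom_ob t' by blast
  have st': "Cmp A s' t' \<in> hom A W X" using A.cmp_hom[OF t' s'] .
  have "Cmp A v (Cmp A s' t') = Cmp A (Cmp A v s') t'" using A.assoc[OF t' s' v] .
  also have "\<dots> = Zer A W P" using A.comp_zero[OF dt' t' vs'] .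
  finally obtain t where t: "t \<in> hom A W Z" and tt: "Cmp A s' t' = Cmp A s t"
    using A.wker[OF d s v st'] by metis
  have Ft'i: "is_iso B (Fm t')"
    using B.cone_zero_iso[OF F_dist[OF dt' t'] F.F_hom[OF t'] F.F_hom[OF vs'] Pz] .
  have Ft: "Fm t \<in> hom B (Fo W) (Fo Z)" using F.F_hom[OF t] .
  have Ft': "Fm t' \<in> hom B (Fo W) (Fo Z')" using F.F_hom[OF t'] .
  have st: "Cmp A s t \<in> hom A W X" using A.cmp_hom[OF t s] .
  have Fst: "Fm (Cmp A s t) = Cmp B (Fm s') (Fm t')" using tt[symmetric] F.F_cmp[OF t' s'] by simp
  have Fsti: "is_iso B (Fm (Cmp A s t))" using Fst B.iso_cmp[OF Ft' Fs' Ft'i Fsi'] by simp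
  have e3: "Cmp B (Fm s) (Fm t) = Cmp B (Fm s') (Fm t')" using Fst F.F_cmp[OF t s] by simp
  have fi: "Cmp B (Fm f') i' \<in> hom B (Fo X) (Fo Y)" using B.cmp_hom[OF i'(1) Ff'] .
  have "Fm f = Cmp B (Fm f) (Cmp B i (Fm s))" using i(2) B.id_r[OF Ff] by simp
  also have "\<dots> = Cmp B (Cmp B (Fm f') i') (Fm s)" using B.assoc[OF Fs i(1) Ff] eq2 by simp
  finally have Ffe: "Fm f = Cmp B (Cmp B (Fm f') i') (Fm s)" .
  have ft: "Cmp A f t \<in> hom A W Y" using A.cmp_hom[OF t f] .
  have ft': "Cmp A f' t' \<in> hom A W Y" using A.cmp_hom[OF t' f'] .
  have "Fm (Cmp A f t) = Cmp B (Cmp B (Cmp B (Fm f') i') (Fm s)) (Fm t)" using F.F_cmp[OF t f] Ffe by simp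
  also have "\<dots> = Cmp B (Cmp B (Fm f') i') (Cmp B (Fm s) (Fm t))" using B.assoc[OF Ft Fs fi] by simp
  also have "\<dots> = Cmp B (Cmp B (Fm f') i') (Cmp B (Fm s') (Fm t'))" using e3 by simp
  also have "\<dots> = Cmp B (Fm f') (Cmp B i' (Cmp B (Fm s') (Fm t')))"
    using B.assoc[OF B.cmp_hom[OF Ft' Fs'] i'(1) Ff'] by simp
  also have "\<dots> = Cmp B (Fm f') (Cmp B (Cmp B i' (Fm s')) (Fm t'))" using B.assoc[OF Ft' Fs' i'(1)] by simp
  also have "\<dots> = Fm (Cmp A f' t')" using i'(2) B.id_l[OF Ft'] F.F_cmp[OF t' f'] by simp
  finally have Feq: "Fm (Cmp A f t) = Fm (Cmp A f' t')" .
  define dd where "dd = Add A (Cmp A f t) (Neg A (Cmp A f' t'))"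
  have dd: "dd \<in> hom A W Y" unfolding dd_def using A.add_hom[OF ft A.neg_hom[OF ft']] .
  have "Fm dd = Add B (Fm (Cmp A f t)) (Neg B (Fm (Cmp A f' t')))"
    unfolding dd_def using F.F_add[OF ft A.neg_hom[OF ft']] F.F_neg[OF ft'] by simp
  also have "\<dots> = Zer B (Fo W) (Fo Y)" using Feq B.add_neg[OF F.F_hom[OF ft']] by simp
  finally have "Fm dd = Zer B (Fo (Dom A dd)) (Fo (Cod A dd))" using A.hom_dom[OF dd] A.hom_cod[OF dd] by simp
  then have "\<exists>K\<in>Ob A. \<exists>g\<in>hom A (Dom A dd) K. \<exists>h\<in>hom A K (Cod A dd). dd = Cmp A h g \<and> is_zero_obj B (Fo K)"
    using O A.hom_ar[OF dd] unfolding objective_def by blast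
  then obtain K g h where K: "K \<in> Ob A" and g: "g \<in> hom A W K" and h: "h \<in> hom A K Y"
    and dgh: "dd = Cmp A h g" and kz: "is_zero_obj B (Fo K)"
    unfolding A.hom_dom[OF dd] A.hom_cod[OF dd] by blast
  obtain W2 u c2 where u: "u \<in> hom A W2 W" and du: "(u, g, c2) \<in> Dist A"
    using A.back_rot[OF g] by blast
  have W2: "W2 \<in> Ob A" using A.hom_ob u by blast
  have "Cmp A dd u = Cmp A h (Cmp A g u)" using dgh A.assoc[OF u g h] by simp
  also have "\<dots> = Zer A W2 Y" using A.comp_zero[OF du u g] A.cmp_zer_r[OF h W2] by simp
  finally have du0: "Cmp A dd u = Zer A W2 Y" .
  have "Cmp A dd u = Add A (Cmp A (Cmp A f t) u) (Neg A (Cmp A (Cmp A f' t') u))"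
    unfolding dd_def using A.dist_l[OF u ft A.neg_hom[OF ft']] A.cmp_neg_l[OF u ft'] by simp
  then have "Cmp A (Cmp A f t) u = Cmp A (Cmp A f' t') u"
    using A.diff_zero[OF A.cmp_hom[OF u ft] A.cmp_hom[OF u ft']] du0 by simp
  then have feq: "Cmp A f (Cmp A t u) = Cmp A f' (Cmp A t' u)"
    using A.assoc[OF u t f] A.assoc[OF u t' f'] by simp
  have seq: "Cmp A s (Cmp A t u) = Cmp A s' (Cmp A t' u)"
    using A.assoc[OF u t s] A.assoc[OF u t' s'] tt by simp
  have Fui: "is_iso B (Fm u)" using B.cone_zero_iso[OF F_dist[OF du u] F.F_hom[OF u] F.F_hom[OF g] kz] .
  have stu: "Cmp A s (Cmp A t u) = Cmp A (Cmp A s t) u" using A.assoc[OF u t s] .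
  have "is_iso B (Fm (Cmp A s (Cmp A t u)))"
    using stu F.F_cmp[OF u st] B.iso_cmp[OF F.F_hom[OF u] F.F_hom[OF st] Fui Fsti] by simp
  then have qq: "quasi_iso A (in_Ker B Fo) (Cmp A s (Cmp A t u))"
    using qi_of A.hom_ar[OF A.cmp_hom[OF A.cmp_hom[OF u t] s]] by blast
  have tu: "Cmp A t u \<in> hom A W2 (Dom A s)" using A.cmp_hom[OF u t] unfolding Z_def .
  have tu': "Cmp A t' u \<in> hom A W2 (Dom A s')" using A.cmp_hom[OF u t'] unfolding Z'_def .
  show "roof_equiv A (in_Ker B Fo) r r'"
    unfolding r r' roof_equiv_def prod.case using W2 tu tu' seq qq feq by blast
qed

end


theorem theorem1p1:
  fixes A :: "('o,'m) tricat" and B :: "('p,'n) tricat"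
    and Fo :: "'o \<Rightarrow> 'p" and Fm :: "'m \<Rightarrow> 'n" and \<xi> :: "'o \<Rightarrow> 'n"
  assumes "is_triangulated A" and "is_triangulated B"
    and "is_triangle_functor A B Fo Fm \<xi>"
  shows "(WSM A B Fo Fm \<longleftrightarrow> objective A B Fo Fm) \<and>
         (objective A B Fo Fm \<longleftrightarrow> induced_faithful A B Fo Fm)"
proof -
  have a1: "is_additive A" using assms(1)[unfolded is_triangulated_def, THEN conjunct1] .
  have a2: "is_additive B" using assms(2)[unfolded is_triangulated_def, THEN conjunct1] .
  interpret trifun A B Fo Fm \<xi>
    by unfold_locales (rule a1 assms(1) a2 assms(2) assms(3))+
  show ?thesis using WSM_obj obj_WSM faith_obj obj_faith by blast
qed

end
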